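(* In the setting below, if $H_\varepsilon$ is $\mathcal R$-reversible with respect to $\mathcal R(q,p)=(Rq,-Rp)$, $R=\mathrm{diag}(-1,-1)$ (i.e. $X_{H_\varepsilon}\circ\mathcal R=-\mathcal RX_{H_\varepsilon}$), then $q_2\mapsto\mathcal L_\varepsilon(\pi,q_2)$ is an even function; moreover, if the loop is of type (B), then $q_2\mapsto L(\pi,q_2)$ is an even function.
   Context: $\mathbb T^2=(\mathbb R/2\pi\mathbb Z)^2$; $H_\varepsilon=H+\varepsilon H_*$ on $T^*\mathbb T^2$, $H(q,p)=\tfrac12\langle B(q)p,p\rangle+V(q)$ with $B,V$ smooth, $2\pi$-periodic, $B$ symmetric positive definite, $\frac{\partial B}{\partial q_2}(q_1,0)=0$, $V$ with a nondegenerate maximum at $q=0$, $V(0)=0$; $H_*$ smooth, $2\pi$-periodic in $q$. $O=(0,0,0,0)$, $O_\varepsilon$ its continuation; $\gamma$ is a homoclinic orbit of $O$ for $H$ in $\{q_2=0\}$, $q_1$ increasing from $0$ to $2\pi$. Near $\gamma$, $W^u_\varepsilon$ is the graph $p=\nabla S^u_\varepsilon(q)$ on a neighbourhood of $\{0\le q_1\le\pi+a',q_2=0\}$ and the stable manifold of $O_\varepsilon$ near $O_\varepsilon$ is $p=\nabla S^s_\varepsilon(q)$ on a neighbourhood of $\{-\pi-a'\le q_1\le0,q_2=0\}$; $\widehat S^s_\varepsilon(q_1,q_2)=S^s_\varepsilon(q_1-2\pi,q_2)+\sigma_\varepsilon$ ($\sigma_\varepsilon$ a constant), and $\mathcal L_\varepsilon=S^u_\varepsilon-\widehat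 S^s_\varepsilon$ near $(\pi,0)$. Type (B): for $\varepsilon=0$, $S:=S^u_0=\widehat S^s_0$ (coinciding manifolds). Then $\check q(t,q)$ solves $\dot q=B(q)\nabla S(q)$, $\check q(0,q)=q$, $\check x(t,q)=(\check q(t,q),\nabla S(\check q(t,q)))$ and $L(q)=-\int_{-\infty}^{\infty}[H_*(\check x(t,q))-H_*(O)]\,dt$. *)

theory Defs
  imports "HOL-Analysis.Analysis"
begin

(* Configuration space: the lift R^2 of T^2 = (R/2piZ)^2, points q = (q1,q2).
   Phase space T^*T^2 lifted: x = (q,p). *)
type_synonym pt = "real \<times> real"
type_synonym st = "(real \<times> real) \<times> (real \<times> real)"

definition pd :: "('a::real_normed_vector \<Rightarrow> real) \<Rightarrow> 'a \<Rightarrow> 'a \<Rightarrow> real" where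
  "pd f b x = deriv (\<lambda>t. f (x + t *\<^sub>R b)) 0"

definition grad :: "('a::euclidean_space \<Rightarrow> real) \<Rightarrow> 'a \<Rightarrow> 'a" where
  "grad f x = (\<Sum>b\<in>Basis. pd f b x *\<^sub>R b)"

(* C^infinity on an (open) set U: all iterated partial derivatives exist and are continuous;
   D l is the iterated partial derivative along the directions in the list l *)
definition smooth_on :: "'a::euclidean_space set \<Rightarrow> ('a \<Rightarrow> real) \<Rightarrow> bool" where
  "smooth_on U f \<longleftrightarrow>
     (\<exists>D :: 'a list \<Rightarrow> 'a \<Rightarrow> real. D [] = f \<and> (\<forall>l. continuous_on U (D l)) \<and>
        (\<forall>l x b. x \<in> U \<longrightarrow> b \<in> Basis \<longrightarrow>
            ((\<lambda>t. D l (x + t *\<^sub>R b)) has_real_derivative D (b # l) x) (at 0)))"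

definition ham_vf :: "(st \<Rightarrow> real) \<Rightarrow> st \<Rightarrow> st" where
  "ham_vf F x = (snd (grad F x), - fst (grad F x))"

definition Rlin :: "pt \<Rightarrow> pt" where
  "Rlin q = (- fst q, - snd q)"

definition calR :: "st \<Rightarrow> st" where
  "calR x = (Rlin (fst x), - Rlin (snd x))"

definition reversible :: "(st \<Rightarrow> real) \<Rightarrow> bool" where
  "reversible F \<longleftrightarrow> (\<forall>x. ham_vf F (calR x) = - calR (ham_vf F x))"

(* H(q,p) = 1/2 <B(q)p,p> + V(q) ; B q is the linear map p \<mapsto> B(q)p *)
definition Ham :: "(pt \<Rightarrow> pt \<Rightarrow> pt) \<Rightarrow> (pt \<Rightarrow> real) \<Rightarrow> st \<Rightarrow> real" where
  "Ham B V x = (1/2) * inner (B (fst x) (snd x)) (snd x) + V (fst x)"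

definition Heps :: "(pt \<Rightarrow> pt \<Rightarrow> pt) \<Rightarrow> (pt \<Rightarrow> real) \<Rightarrow> (st \<Rightarrow> real) \<Rightarrow> real \<Rightarrow> st \<Rightarrow> real" where
  "Heps B V Hs \<epsilon> x = Ham B V x + \<epsilon> * Hs x"

definition periodic2 :: "(pt \<Rightarrow> 'b) \<Rightarrow> bool" where
  "periodic2 f \<longleftrightarrow> (\<forall>q. f (q + (2*pi, 0)) = f q \<and> f (q + (0, 2*pi)) = f q)"

definition Wu_loc :: "(st \<Rightarrow> real) \<Rightarrow> st \<Rightarrow> st set \<Rightarrow> st set" where
  "Wu_loc F E N = {x. \<exists>y. y 0 = x \<and>
      (\<forall>t\<le>0. y t \<in> N \<and> (y has_vector_derivative ham_vf F (y t)) (at t within {..0})) \<and>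
      (y \<longlongrightarrow> E) at_bot}"

definition Ws_loc :: "(st \<Rightarrow> real) \<Rightarrow> st \<Rightarrow> st set \<Rightarrow> st set" where
  "Ws_loc F E N = {x. \<exists>y. y 0 = x \<and>
      (\<forall>t\<ge>0. y t \<in> N \<and> (y has_vector_derivative ham_vf F (y t)) (at t within {0..})) \<and>
      (y \<longlongrightarrow> E) at_top}"

definition Shat :: "(pt \<Rightarrow> real) \<Rightarrow> real \<Rightarrow> pt \<Rightarrow> real" where
  "Shat Ss \<sigma> q = Ss (q - (2*pi, 0)) + \<sigma>"

definition Lcal :: "(pt \<Rightarrow> real) \<Rightarrow> (pt \<Rightarrow> real) \<Rightarrow> real \<Rightarrow> pt \<Rightarrow> real" where
  "Lcal Su Ss \<sigma> q = Su q - Shat Ss \<sigma> q"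

definition typeB :: "(pt \<Rightarrow> real) \<Rightarrow> pt set \<Rightarrow> (pt \<Rightarrow> real) \<Rightarrow> pt set \<Rightarrow> real \<Rightarrow> bool" where
  "typeB Su Uu Ss Us \<sigma> \<longleftrightarrow>
     (\<forall>q \<in> Uu \<inter> (\<lambda>q. q + (2*pi, 0)) ` Us. Su q = Shat Ss \<sigma> q)"

definition Sglue :: "(pt \<Rightarrow> real) \<Rightarrow> pt set \<Rightarrow> (pt \<Rightarrow> real) \<Rightarrow> real \<Rightarrow> pt \<Rightarrow> real" where
  "Sglue Su Uu Ss \<sigma> q = (if q \<in> Uu then Su q else Shat Ss \<sigma> q)"

definition Sdom :: "pt set \<Rightarrow> pt set \<Rightarrow> pt set" where
  "Sdom Uu Us = Uu \<union> (\<lambda>q. q + (2*pi, 0)) ` Us"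

definition Lmel :: "(st \<Rightarrow> real) \<Rightarrow> (real \<Rightarrow> pt \<Rightarrow> pt) \<Rightarrow> (pt \<Rightarrow> real) \<Rightarrow> pt \<Rightarrow> real" where
  "Lmel Hs qc S q = - integral UNIV (\<lambda>t. Hs (qc t q, grad S (qc t q)) - Hs ((0,0),(0,0)))"

end

theory Submission
  imports Defs
begin

lemma calR_simp[simp]: "calR ((a,b),(c,d)) = ((-a,-b),(c,d))"
  by (simp add: calR_def Rlin_def)

lemma calR_eq: "calR x = ((- fst (fst x), - snd (fst x)), snd x)"
  by (cases x) (auto simp: calR_def Rlin_def)

lemma calR_calR[simp]: "calR (calR x) = x"
  by (simp add: calR_eq)

lemma bl_calR: "bounded_linear calR"
proof -
  have "calR = (\<lambda>x. ((- fst (fst x), - snd (fst x)), snd x))" by (rule ext, rule calR_eq)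
  moreover have "bounded_linear (\<lambda>x::st. ((- fst (fst x), - snd (fst x)), snd x))"
    by (intro bounded_linear_Pair bounded_linear_minus bounded_linear_compose[OF bounded_linear_fst]
         bounded_linear_compose[OF bounded_linear_snd] bounded_linear_fst bounded_linear_snd bounded_linear_ident)
  ultimately show ?thesis by simp
qed

lemma norm_calR[simp]: "norm (calR x) = norm x"
  by (cases x) (auto simp: calR_eq norm_Pair)

lemma calR_minus: "calR (- x) = - calR x"
  by (simp add: calR_eq)

lemma calR_zero[simp]: "calR 0 = 0"
  by (simp add: calR_eq zero_prod_def)

lemma reversal:
  assumes x: "x \<in> Wu_loc F E N" and rv: "reversible F" and E: "calR E = E"
  shows "calR x \<in> Ws_loc F E (calR ` N)"
proof -
  from x obtain y where y0: "y 0 = x"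
    and yN: "\<And>t. t \<le> 0 \<Longrightarrow> y t \<in> N"
    and yd: "\<And>t. t \<le> 0 \<Longrightarrow> (y has_vector_derivative ham_vf F (y t)) (at t within {..0})"
    and ylim: "(y \<longlongrightarrow> E) at_bot"
    unfolding Wu_loc_def by blast
  define z where "z = (\<lambda>t. calR (y (- t)))"
  have "z 0 = calR x" by (simp add: z_def y0)
  moreover have "z t \<in> calR ` N \<and> (z has_vector_derivative ham_vf F (z t)) (at t within {0..})" if "t \<ge> 0" for t
  proof
    show "z t \<in> calR ` N" using yN[of "-t"] that by (simp add: z_def)
    have m: "(uminus has_vector_derivative (-1)) (at t within {0..})"
      by (auto intro!: derivative_eq_intros)
    have img: "uminus ` {0::real..} = {..0}"
      by (auto simp: image_iff intro!: bexI[where x="- _"])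
    have "(y has_vector_derivative ham_vf F (y (- t))) (at (uminus t) within uminus ` {0..})"
      using yd[of "-t"] that img by simp
    from vector_diff_chain_within[OF m this]
    have "((\<lambda>t. y (- t)) has_vector_derivative - ham_vf F (y (- t))) (at t within {0..})"
      by (simp add: o_def)
    from bounded_linear.has_vector_derivative[OF bl_calR this]
    have "(z has_vector_derivative calR (- ham_vf F (y (- t)))) (at t within {0..})"
      by (simp add: z_def)
    moreover have "calR (- ham_vf F (y (- t))) = ham_vf F (z t)"
      using rv unfolding reversible_def z_def by (simp only: calR_minus)
    ultimately show "(z has_vector_derivative ham_vf F (z t)) (at t within {0..})" by simp
  qed
  moreover have "(z \<longlongrightarrow> E) at_top"
  proof -
    have "((\<lambda>t. y (- t)) \<longlongrightarrow> E) at_top"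
      using ylim by (simp add: at_bot_mirror filterlim_filtermap)
    from bounded_linear.tendsto[OF bl_calR this] E show ?thesis by (simp add: z_def)
  qed
  ultimately show ?thesis unfolding Ws_loc_def by blast
qed

lemma Basis_pt: "(Basis :: pt set) = {(1,0),(0,1)}"
  by (auto simp: Basis_prod_def)

lemma Basis_st: "(Basis :: st set) = {((1,0),(0,0)),((0,1),(0,0)),((0,0),(1,0)),((0,0),(0,1))}"
  by (auto simp: Basis_prod_def zero_prod_def)

lemma grad_pt: "grad (f::pt\<Rightarrow>real) x = (pd f (1,0) x, pd f (0,1) x)"
  by (simp add: grad_def Basis_pt)

lemma grad_st: "grad (f::st\<Rightarrow>real) x =
   ((pd f ((1,0),(0,0)) x, pd f ((0,1),(0,0)) x), (pd f ((0,0),(1,0)) x, pd f ((0,0),(0,1)) x))"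
  by (simp add: grad_def Basis_st)

lemma pd_eqI: "((\<lambda>t. f (x + t *\<^sub>R b)) has_real_derivative d) (at 0) \<Longrightarrow> pd f b x = d"
  unfolding pd_def by (rule DERIV_imp_deriv)

lemma smooth_pd:
  assumes "smooth_on U f" "x \<in> U" "b \<in> Basis"
  shows "((\<lambda>t. f (x + t *\<^sub>R b)) has_real_derivative pd f b x) (at 0)"
proof -
  from assms(1) obtain D where D: "D [] = f"
    "\<And>l x b. x \<in> U \<Longrightarrow> b \<in> Basis \<Longrightarrow> ((\<lambda>t. D l (x + t *\<^sub>R b)) has_real_derivative D (b # l) x) (at 0)"
    unfolding smooth_on_def by blast
  from D(2)[of x b "[]"] assms have "((\<lambda>t. f (x + t *\<^sub>R b)) has_real_derivative D [b] x) (at 0)"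
    by (simp add: D(1))
  with pd_eqI show ?thesis by metis
qed

lemma pd_local:
  assumes "open U" "x \<in> U" "\<And>y. y \<in> U \<Longrightarrow> f y = g y"
  shows "pd f b x = pd g b x"
proof -
  have "open ((\<lambda>t::real. x + t *\<^sub>R b) -` U)"
    by (rule open_vimage[OF assms(1)]) (intro continuous_intros)
  moreover have "0 \<in> (\<lambda>t::real. x + t *\<^sub>R b) -` U" using assms(2) by simp
  ultimately have "\<forall>\<^sub>F t in nhds 0. x + t *\<^sub>R b \<in> U"
    using eventually_nhds_in_open by fastforce
  then have "\<forall>\<^sub>F t in nhds 0. f (x + t *\<^sub>R b) = g (x + t *\<^sub>R b)"
    by eventually_elim (use assms(3) in auto)
  then show ?thesis unfolding pd_def by (intro deriv_cong_ev) auto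
qed

lemma grad_local:
  assumes "open U" "x \<in> U" "\<And>y. y \<in> U \<Longrightarrow> f y = g y"
  shows "grad f x = grad g x"
  unfolding grad_def using pd_local[OF assms] by simp

lemma pd_shift_const:
  "pd (\<lambda>q. f (q - c) + k) b x = pd f b (x - c)"
proof -
  have "(\<lambda>D. ((\<lambda>t. f (x + t *\<^sub>R b - c) + k) has_field_derivative D) (at 0))
      = (\<lambda>D. ((\<lambda>t. f (x - c + t *\<^sub>R b)) has_field_derivative D) (at 0))"
  proof (rule ext)
    fix D
    have "((\<lambda>t. f (x + t *\<^sub>R b - c) + k) has_vector_derivative D) (at 0) =
          ((\<lambda>t. f (x + t *\<^sub>R b - c)) has_vector_derivative D) (at 0)"
      by (rule has_vector_derivative_add_const)
    moreover have "(\<lambda>t. f (x + t *\<^sub>R b - c)) = (\<lambda>t. f (x - c + t *\<^sub>R b))"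
      by (simp add: algebra_simps)
    ultimately show "((\<lambda>t. f (x + t *\<^sub>R b - c) + k) has_field_derivative D) (at 0)
      = ((\<lambda>t. f (x - c + t *\<^sub>R b)) has_field_derivative D) (at 0)"
      by (simp add: has_real_derivative_iff_has_vector_derivative)
  qed
  then show ?thesis unfolding pd_def deriv_def by (simp add: algebra_simps)
qed

lemma grad_shift_const:
  "grad (\<lambda>q. f (q - c) + k) x = grad f (x - c)"
  unfolding grad_def pd_shift_const ..

lemma Shat_grad: "grad (Shat Ss \<sigma>) x = grad Ss (x - (2*pi,0))"
proof -
  have "Shat Ss \<sigma> = (\<lambda>q. Ss (q - (2*pi,0)) + \<sigma>)" by (rule ext) (simp add: Shat_def)
  then show ?thesis by (simp add: grad_shift_const)
qed

lemma grad_sym: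
  assumes Wu: "{(q, grad Su q) | q. q \<in> Uu} = {x \<in> Wu_loc F E N. fst x \<in> Uu}"
    and Ws: "{(q, grad Ss q) | q. q \<in> Us} = {x \<in> Ws_loc F E (calR ` N). fst x \<in> Us}"
    and rv: "reversible F" and E: "calR E = E"
    and q: "q \<in> Uu" "- q \<in> Us"
  shows "grad Ss (- q) = grad Su q"
proof -
  have "(q, grad Su q) \<in> Wu_loc F E N" using Wu q by blast
  from reversal[OF this rv E] have "calR (q, grad Su q) \<in> Ws_loc F E (calR ` N)" .
  moreover have cq: "calR (q, grad Su q) = (- q, grad Su q)"
    by (simp add: calR_def Rlin_def prod_eq_iff)
  ultimately have "(- q, grad Su q) \<in> {x \<in> Ws_loc F E (calR ` N). fst x \<in> Us}" using q by simp
  then have "(- q, grad Su q) \<in> {(q, grad Ss q) | q. q \<in> Us}" using Ws by simp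
  then show ?thesis by auto
qed

lemma calR_fixed:
  assumes "ham_vf F E = 0" "reversible F"
    and r: "r > 0" "E \<in> ball 0 r" "\<forall>x\<in>ball 0 r. ham_vf F x = 0 \<longrightarrow> x = E"
  shows "calR E = E"
proof -
  have "ham_vf F (calR E) = 0" using assms(1,2) unfolding reversible_def
    by (metis calR_zero minus_zero)
  moreover have "calR E \<in> ball 0 r" using r(2) by simp
  ultimately show ?thesis using r(3) by blast
qed

lemma part1:
  fixes Su Ss :: "pt \<Rightarrow> real"
  assumes Wu: "{(q, grad Su q) | q. q \<in> Uu} = {x \<in> Wu_loc F E N. fst x \<in> Uu}"
    and Ws: "{(q, grad Ss q) | q. q \<in> Us} = {x \<in> Ws_loc F E (calR ` N). fst x \<in> Us}"
    and rv: "reversible F" and E: "calR E = E"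
    and oU: "open Uu" "(pi,0) \<in> Uu" and oS: "open Us" "(-pi,0) \<in> Us"
    and sU: "smooth_on Uu Su" and sS: "smooth_on Us Ss"
  shows "\<exists>\<delta>>0. \<forall>q2. \<bar>q2\<bar> < \<delta> \<longrightarrow> Lcal Su Ss \<sigma> (pi, q2) = Lcal Su Ss \<sigma> (pi, - q2)"
proof -
  obtain d1 where d1: "d1 > 0" "ball (pi,0) d1 \<subseteq> Uu" using oU open_contains_ball by blast
  obtain d2 where d2: "d2 > 0" "ball (-pi,0) d2 \<subseteq> Us" using oS open_contains_ball by blast
  define d where "d = min d1 d2"
  have inU: "(pi, s) \<in> Uu" and inS: "(-pi, s) \<in> Us" if "\<bar>s\<bar> < d" for s
  proof -
    have "dist (pi,0) (pi,s) = \<bar>s\<bar>" "dist (-pi,0) (-pi,s) = \<bar>s\<bar>"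
      by (simp_all add: dist_Pair_Pair dist_real_def)
    then show "(pi, s) \<in> Uu" "(-pi, s) \<in> Us" using d1 d2 that by (auto simp: d_def)
  qed
  define h where "h s = Su (pi, s) + Ss (-pi, - s)" for s
  have hd: "(h has_field_derivative 0) (at s within ball 0 d)" if "s \<in> ball 0 d" for s
  proof -
    have s: "\<bar>s\<bar> < d" using that by (simp add: dist_real_def)
    have e: "((0::real),(1::real)) \<in> Basis" by (simp add: Basis_pt)
    from smooth_pd[OF sU inU[OF s] e]
    have a: "((\<lambda>t. Su (pi, t + s)) has_real_derivative pd Su (0,1) (pi,s)) (at 0)"
      by (simp add: add.commute)
    have ms: "\<bar>- s\<bar> < d" using s by simp
    from smooth_pd[OF sS inS[OF ms] e]
    have b: "((\<lambda>t. Ss (-pi, t + - s)) has_real_derivative pd Ss (0,1) (-pi,-s)) (at 0)"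
      by (simp add: add.commute)
    have a': "((\<lambda>t. Su (pi, t)) has_real_derivative pd Su (0,1) (pi,s)) (at s)"
      using a DERIV_shift[where f="\<lambda>t. Su (pi,t)" and x=0 and z=s] by simp
    have b': "((\<lambda>t. Ss (-pi, t)) has_real_derivative pd Ss (0,1) (-pi,-s)) (at (-s))"
      using b DERIV_shift[where f="\<lambda>t. Ss (-pi,t)" and x=0 and z="-s"] by simp
    have b'': "((\<lambda>t. Ss (-pi, - t)) has_real_derivative - pd Ss (0,1) (-pi,-s)) (at s)"
    proof -
      have u: "(uminus has_field_derivative (-1)) (at s)" by (auto intro!: derivative_eq_intros)
      have b3: "((\<lambda>t. Ss (-pi, t)) has_real_derivative pd Ss (0,1) (-pi,-s)) (at (uminus s))"
        using b' by simp
      from DERIV_chain2[where f="\<lambda>t. Ss (-pi, t)" and g=uminus, OF b3 u] show ?thesis by simp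
    qed
    have "grad Ss (- (pi,s)) = grad Su (pi,s)"
      by (rule grad_sym[OF Wu Ws rv E inU[OF s]]) (use inS[OF ms] in simp)
    then have eq: "pd Ss (0,1) (-pi,-s) = pd Su (0,1) (pi,s)"
      by (simp add: grad_pt)
    have "(h has_field_derivative pd Su (0,1) (pi,s) + - pd Ss (0,1) (-pi,-s)) (at s)"
      unfolding h_def[abs_def] by (rule DERIV_add[OF a' b''])
    then show ?thesis using eq by (simp add: has_field_derivative_at_within)
  qed
  obtain c where c: "\<forall>x\<in>ball 0 d. h x = c"
    using has_field_derivative_zero_constant[OF convex_ball hd] by blast
  show ?thesis
  proof (intro exI[of _ d] conjI allI impI)
    show "d > 0" using d1 d2 by (simp add: d_def)
    fix q2 :: real assume q: "\<bar>q2\<bar> < d"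
    have "h q2 = h (- q2)" using c q by (auto simp: dist_real_def)
    then show "Lcal Su Ss \<sigma> (pi, q2) = Lcal Su Ss \<sigma> (pi, - q2)"
      by (simp add: Lcal_def Shat_def h_def)
  qed
qed

definition sfam :: "pt set \<Rightarrow> (pt \<Rightarrow> real) \<Rightarrow> (pt list \<Rightarrow> pt \<Rightarrow> real) \<Rightarrow> bool" where
  "sfam U f D \<longleftrightarrow> D [] = f \<and> (\<forall>l. continuous_on U (D l)) \<and>
        (\<forall>l x b. x \<in> U \<longrightarrow> b \<in> Basis \<longrightarrow>
            ((\<lambda>t. D l (x + t *\<^sub>R b)) has_real_derivative D (b # l) x) (at 0))"

lemma smooth_sfam: "smooth_on U f \<longleftrightarrow> (\<exists>D. sfam U f D)"
  unfolding smooth_on_def sfam_def by blast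

lemma sf_d1:
  assumes "sfam U f D" "(a,c) \<in> U"
  shows "((\<lambda>t. D l (t,c)) has_real_derivative D ((1,0)#l) (a,c)) (at a)"
proof -
  have "((\<lambda>t. D l ((a,c) + t *\<^sub>R (1,0))) has_real_derivative D ((1,0)#l) (a,c)) (at 0)"
    using assms unfolding sfam_def by (auto simp: Basis_pt)
  then have "((\<lambda>t. D l (t + a, c)) has_real_derivative D ((1,0)#l) (a,c)) (at 0)"
    by (simp add: add.commute)
  then show ?thesis using DERIV_shift[where f="\<lambda>t. D l (t,c)" and x=0 and z=a] by simp
qed

lemma sf_d2:
  assumes "sfam U f D" "(a,c) \<in> U"
  shows "((\<lambda>t. D l (a,t)) has_real_derivative D ((0,1)#l) (a,c)) (at c)"
proof -
  have "((\<lambda>t. D l ((a,c) + t *\<^sub>R (0,1))) has_real_derivative D ((0,1)#l) (a,c)) (at 0)"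
    using assms unfolding sfam_def by (auto simp: Basis_pt)
  then have "((\<lambda>t. D l (a, t + c)) has_real_derivative D ((0,1)#l) (a,c)) (at 0)"
    by (simp add: add.commute)
  then show ?thesis using DERIV_shift[where f="\<lambda>t. D l (a,t)" and x=0 and z=c] by simp
qed

lemma sf_cont: "sfam U f D \<Longrightarrow> continuous_on U (D l)"
  unfolding sfam_def by blast

lemma sf_pd:
  assumes "sfam U f D" "x \<in> U" "b \<in> Basis"
  shows "pd (D l) b x = D (b # l) x"
  using assms unfolding sfam_def by (intro pd_eqI) blast

lemma sf_grad:
  assumes "sfam U f D" "x \<in> U"
  shows "grad f x = (D [(1,0)] x, D [(0,1)] x)"
proof -
  have "f = D []" using assms unfolding sfam_def by simp
  then show ?thesis using sf_pd[OF assms(1,2), of _ "[]"] by (simp add: grad_pt Basis_pt)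
qed

lemma box_in_open:
  fixes x :: pt
  assumes "open U" "x \<in> U"
  obtains r where "r > 0" "\<And>a c. \<bar>a - fst x\<bar> < r \<Longrightarrow> \<bar>c - snd x\<bar> < r \<Longrightarrow> (a,c) \<in> U"
proof -
  obtain e where e: "e > 0" "ball x e \<subseteq> U" using assms open_contains_ball by blast
  have "(a,c) \<in> U" if "\<bar>a - fst x\<bar> < e/2" "\<bar>c - snd x\<bar> < e/2" for a c
  proof -
    have "dist x (a,c) \<le> \<bar>fst x - a\<bar> + \<bar>snd x - c\<bar>"
      by (cases x) (simp add: dist_Pair_Pair dist_real_def real_sqrt_sum_squares_triangle_ineq
          sqrt_sum_squares_le_sum_abs)
    also have "\<dots> < e" using that by linarith
    finally show ?thesis using e by auto
  qed
  then show ?thesis using that[of "e/2"] e by auto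
qed

lemma sf_frechet:
  assumes sf: "sfam U f D" and U: "open U" and x: "x \<in> U"
  shows "(D l has_derivative (\<lambda>h. fst h * D ((1,0)#l) x + snd h * D ((0,1)#l) x)) (at x)"
proof -
  obtain x1 x2 where xx: "x = (x1,x2)" by (cases x)
  obtain r where r: "r > 0" "\<And>a c. \<bar>a - x1\<bar> < r \<Longrightarrow> \<bar>c - x2\<bar> < r \<Longrightarrow> (a,c) \<in> U"
    using box_in_open[OF U x] xx by auto
  define X where "X = {x1 - r <..< x1 + r}"
  define Y where "Y = {x2 - r <..< x2 + r}"
  have XY: "a \<in> X \<Longrightarrow> c \<in> Y \<Longrightarrow> (a,c) \<in> U" for a c
    using r unfolding X_def Y_def by (auto simp: abs_less_iff)
  have x1X: "x1 \<in> X" and x2Y: "x2 \<in> Y" using r by (auto simp: X_def Y_def)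
  have oXY: "open (X \<times> Y)" by (auto simp: X_def Y_def intro!: open_Times)
  have fx: "((\<lambda>a. D l (a, x2)) has_derivative (\<lambda>h. h * D ((1,0)#l) x)) (at x1 within X)"
  proof -
    have "((\<lambda>a. D l (a, x2)) has_real_derivative D ((1,0)#l) (x1,x2)) (at x1)"
      by (rule sf_d1[OF sf XY[OF x1X x2Y]])
    moreover have "(\<lambda>h. h * D ((1,0)#l) x) = (*) (D ((1,0)#l) (x1,x2))" by (auto simp: xx)
    ultimately show ?thesis unfolding has_field_derivative_def
      by (auto intro: has_derivative_at_withinI)
  qed
  have fy: "((\<lambda>c. D l (a, c)) has_derivative blinfun_apply (blinfun_mult_left (D ((0,1)#l) (a,c)))) (at c within Y)"
    if "a \<in> X" "c \<in> Y" for a c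
  proof -
    have "((\<lambda>c. D l (a, c)) has_real_derivative D ((0,1)#l) (a,c)) (at c)"
      by (rule sf_d2[OF sf XY[OF that]])
    moreover have "blinfun_apply (blinfun_mult_left (D ((0,1)#l) (a,c))) = (*) (D ((0,1)#l) (a,c))" by auto
    ultimately show ?thesis unfolding has_field_derivative_def
      by (auto intro: has_derivative_at_withinI)
  qed
  have cU: "continuous (at (x1,x2)) (D ((0,1)#l))"
    using sf_cont[OF sf] U x xx by (metis continuous_on_eq_continuous_at)
  have fc: "continuous (at (x1, x2) within X \<times> Y) (\<lambda>(a, c). blinfun_mult_left (D ((0,1)#l) (a,c)))"
  proof -
    have "continuous (at (x1,x2)) (\<lambda>z. blinfun_mult_left (D ((0,1)#l) z))"
      by (rule continuous_at_compose[OF cU, unfolded o_def]) (intro linear_continuous_at bounded_linear_blinfun_mult_left)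
    then show ?thesis by (auto simp: case_prod_beta' intro: continuous_at_imp_continuous_within)
  qed
  have cY: "convex Y" unfolding Y_def by (rule convex_real_interval)
  from has_derivative_partialsI[where f="\<lambda>a c. D l (a,c)", OF fx fy fc x2Y cY]
  have "((\<lambda>(a, c). D l (a, c)) has_derivative (\<lambda>(ta, tc). ta * D ((1,0)#l) x + tc * D ((0,1)#l) (x1,x2))) (at (x1, x2) within X \<times> Y)"
    by (simp add: Y_def)
  then have "(D l has_derivative (\<lambda>(ta, tc). ta * D ((1,0)#l) x + tc * D ((0,1)#l) (x1,x2))) (at (x1, x2))"
    using at_within_open[OF _ oXY] x1X x2Y by (simp add: case_prod_beta')
  then show ?thesis using xx by (simp add: case_prod_beta')
qed

lemma clairaut:
  assumes sf: "sfam U f D" and U: "open U" and x: "x \<in> U"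
  shows "D [(0,1),(1,0)] x = D [(1,0),(0,1)] x"
proof (rule ccontr)
  assume ne: "D [(0,1),(1,0)] x \<noteq> D [(1,0),(0,1)] x"
  obtain x1 x2 where xx: "x = (x1,x2)" by (cases x)
  define f12 where "f12 = D [(0,1),(1,0)]"
  define f21 where "f21 = D [(1,0),(0,1)]"
  define e where "e = \<bar>f12 x - f21 x\<bar> / 2"
  have e: "e > 0" using ne by (simp add: e_def f12_def f21_def)
  obtain r where r: "r > 0" "\<And>a c. \<bar>a - x1\<bar> < r \<Longrightarrow> \<bar>c - x2\<bar> < r \<Longrightarrow> (a,c) \<in> U"
    using box_in_open[OF U x] xx by auto
  have c12: "continuous (at x) f12" using sf_cont[OF sf] U x unfolding f12_def
    by (metis continuous_on_eq_continuous_at)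
  have c21: "continuous (at x) f21" using sf_cont[OF sf] U x unfolding f21_def
    by (metis continuous_on_eq_continuous_at)
  obtain d1 where d1: "d1 > 0" "\<And>y. dist y x < d1 \<Longrightarrow> dist (f12 y) (f12 x) < e"
    using c12 e unfolding continuous_at_eps_delta by blast
  obtain d2 where d2: "d2 > 0" "\<And>y. dist y x < d2 \<Longrightarrow> dist (f21 y) (f21 x) < e"
    using c21 e unfolding continuous_at_eps_delta by blast
  define h where "h = min r (min d1 d2) / 4"
  have h: "h > 0" "h < r" using r d1 d2 by (auto simp: h_def)
  have close: "dist (a,c) x < min d1 d2" if "x1 \<le> a" "a \<le> x1 + h" "x2 \<le> c" "c \<le> x2 + h" for a c
  proof -
    have "dist (a,c) x \<le> \<bar>a - x1\<bar> + \<bar>c - x2\<bar>"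
      by (simp add: xx dist_Pair_Pair dist_real_def sqrt_sum_squares_le_sum_abs)
    also have "\<dots> \<le> 2 * h" using that by linarith
    also have "\<dots> < min d1 d2" using d1 d2 r by (auto simp: h_def)
    finally show ?thesis .
  qed
  have inU: "(a,c) \<in> U" if "x1 \<le> a" "a \<le> x1 + h" "x2 \<le> c" "c \<le> x2 + h" for a c
    using r(2)[of a c] that h by auto
  have fD: "f = D []" using sf by (simp add: sfam_def)
  define \<Delta> where "\<Delta> = f (x1+h, x2+h) - f (x1+h, x2) - f (x1, x2+h) + f (x1, x2)"
  obtain \<xi> where \<xi>: "x1 < \<xi>" "\<xi> < x1 + h"
    "(\<lambda>a. f (a, x2+h) - f (a, x2)) (x1+h) - (\<lambda>a. f (a, x2+h) - f (a, x2)) x1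
      = (x1 + h - x1) * (D [(1,0)] (\<xi>, x2+h) - D [(1,0)] (\<xi>, x2))"
  proof -
    have "\<exists>z. x1 < z \<and> z < x1 + h \<and>
      (\<lambda>a. f (a, x2+h) - f (a, x2)) (x1+h) - (\<lambda>a. f (a, x2+h) - f (a, x2)) x1
      = (x1 + h - x1) * (D [(1,0)] (z, x2+h) - D [(1,0)] (z, x2))"
    proof (rule MVT2)
      show "x1 < x1 + h" using h by simp
      fix a assume a: "x1 \<le> a" "a \<le> x1 + h"
      have "((\<lambda>t. D [] (t, x2+h)) has_real_derivative D [(1,0)] (a, x2+h)) (at a)"
        using sf_d1[OF sf inU[OF a, of "x2+h"]] h by simp
      moreover have "((\<lambda>t. D [] (t, x2)) has_real_derivative D [(1,0)] (a, x2)) (at a)"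
        using sf_d1[OF sf inU[OF a, of "x2"]] h by simp
      ultimately show "((\<lambda>a. f (a, x2+h) - f (a, x2)) has_real_derivative
          D [(1,0)] (a, x2+h) - D [(1,0)] (a, x2)) (at a)"
        unfolding fD by (rule DERIV_diff)
    qed
    then show ?thesis using that by blast
  qed
  obtain \<eta> where \<eta>: "x2 < \<eta>" "\<eta> < x2 + h"
    "D [(1,0)] (\<xi>, x2+h) - D [(1,0)] (\<xi>, x2) = (x2 + h - x2) * f12 (\<xi>, \<eta>)"
  proof -
    have "\<exists>z. x2 < z \<and> z < x2 + h \<and>
      D [(1,0)] (\<xi>, x2+h) - D [(1,0)] (\<xi>, x2) = (x2 + h - x2) * f12 (\<xi>, z)"
    proof (rule MVT2[where f="\<lambda>c. D [(1,0)] (\<xi>, c)"])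
      show "x2 < x2 + h" using h by simp
      fix c assume c: "x2 \<le> c" "c \<le> x2 + h"
      show "((\<lambda>c. D [(1,0)] (\<xi>, c)) has_real_derivative f12 (\<xi>, c)) (at c)"
        unfolding f12_def using sf_d2[OF sf inU[of \<xi> c]] \<xi> c by simp
    qed
    then show ?thesis using that by blast
  qed
  have D1: "\<Delta> = h * h * f12 (\<xi>, \<eta>)" using \<xi>(3) \<eta>(3) by (simp add: \<Delta>_def algebra_simps)
  obtain \<eta>' where \<eta>': "x2 < \<eta>'" "\<eta>' < x2 + h"
    "(\<lambda>c. f (x1+h, c) - f (x1, c)) (x2+h) - (\<lambda>c. f (x1+h, c) - f (x1, c)) x2
      = (x2 + h - x2) * (D [(0,1)] (x1+h, \<eta>') - D [(0,1)] (x1, \<eta>'))"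
  proof -
    have "\<exists>z. x2 < z \<and> z < x2 + h \<and>
      (\<lambda>c. f (x1+h, c) - f (x1, c)) (x2+h) - (\<lambda>c. f (x1+h, c) - f (x1, c)) x2
      = (x2 + h - x2) * (D [(0,1)] (x1+h, z) - D [(0,1)] (x1, z))"
    proof (rule MVT2)
      show "x2 < x2 + h" using h by simp
      fix c assume c: "x2 \<le> c" "c \<le> x2 + h"
      have "((\<lambda>t. D [] (x1+h, t)) has_real_derivative D [(0,1)] (x1+h, c)) (at c)"
        using sf_d2[OF sf inU[OF _ _ c, of "x1+h"]] h by simp
      moreover have "((\<lambda>t. D [] (x1, t)) has_real_derivative D [(0,1)] (x1, c)) (at c)"
        using sf_d2[OF sf inU[OF _ _ c, of "x1"]] h by simp
      ultimately show "((\<lambda>c. f (x1+h, c) - f (x1, c)) has_real_derivative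
          D [(0,1)] (x1+h, c) - D [(0,1)] (x1, c)) (at c)"
        unfolding fD by (rule DERIV_diff)
    qed
    then show ?thesis using that by blast
  qed
  obtain \<xi>' where \<xi>': "x1 < \<xi>'" "\<xi>' < x1 + h"
    "D [(0,1)] (x1+h, \<eta>') - D [(0,1)] (x1, \<eta>') = (x1 + h - x1) * f21 (\<xi>', \<eta>')"
  proof -
    have "\<exists>z. x1 < z \<and> z < x1 + h \<and>
      D [(0,1)] (x1+h, \<eta>') - D [(0,1)] (x1, \<eta>') = (x1 + h - x1) * f21 (z, \<eta>')"
    proof (rule MVT2[where f="\<lambda>a. D [(0,1)] (a, \<eta>')"])
      show "x1 < x1 + h" using h by simp
      fix a assume a: "x1 \<le> a" "a \<le> x1 + h"
      show "((\<lambda>a. D [(0,1)] (a, \<eta>')) has_real_derivative f21 (a, \<eta>')) (at a)"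
        unfolding f21_def using sf_d1[OF sf inU[of a \<eta>']] \<eta>' a by simp
    qed
    then show ?thesis using that by blast
  qed
  have D2: "\<Delta> = h * h * f21 (\<xi>', \<eta>')" using \<xi>'(3) \<eta>'(3) by (simp add: \<Delta>_def algebra_simps)
  have eq: "f12 (\<xi>, \<eta>) = f21 (\<xi>', \<eta>')" using D1 D2 h by simp
  have "dist (f12 (\<xi>, \<eta>)) (f12 x) < e" using d1(2) close[of \<xi> \<eta>] \<xi> \<eta> by auto
  moreover have "dist (f21 (\<xi>', \<eta>')) (f21 x) < e" using d2(2) close[of \<xi>' \<eta>'] \<xi>' \<eta>' by auto
  ultimately have "\<bar>f12 x - f21 x\<bar> < 2 * e" using eq by (simp add: dist_real_def)
  then show False by (simp add: e_def)
qed

lemma frechet_pd: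
  assumes "(f has_derivative L) (at x)"
  shows "pd f b x = L b"
proof -
  have lin: "linear L" using assms has_derivative_linear by blast
  have "((\<lambda>t::real. x + t *\<^sub>R b) has_derivative (\<lambda>t. t *\<^sub>R b)) (at 0)"
    by (auto intro!: derivative_eq_intros)
  from has_derivative_compose[OF this] assms
  have "((\<lambda>t. f (x + t *\<^sub>R b)) has_derivative (\<lambda>t. L (t *\<^sub>R b))) (at 0)" by simp
  moreover have "(\<lambda>t. L (t *\<^sub>R b)) = (*) (L b)"
    using lin by (auto simp: linear_scale)
  ultimately show ?thesis unfolding has_field_derivative_def[symmetric]
    by (intro pd_eqI) (simp add: has_field_derivative_def)
qed

lemma frechet_grad_inner:
  fixes f :: "'a::euclidean_space \<Rightarrow> real"
  assumes "(f has_derivative L) (at x)"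
  shows "inner (grad f x) h = L h"
proof -
  have lin: "linear L" using assms has_derivative_linear by blast
  have "inner (grad f x) h = (\<Sum>b\<in>Basis. L b * inner b h)"
    unfolding grad_def using frechet_pd[OF assms] by (simp add: inner_sum_left)
  also have "\<dots> = L (\<Sum>b\<in>Basis. inner h b *\<^sub>R b)"
    using lin by (simp add: linear_sum linear_scale inner_commute mult.commute)
  also have "\<dots> = L h" by (simp add: euclidean_representation)
  finally show ?thesis .
qed

lemma add_00[simp]: "(x::pt) + (0,0) = x" by (cases x) simp

lemma inner_E1[simp]: "inner (z::pt) (1,0) = fst z" by (cases z) (simp add: inner_prod_def)
lemma inner_E2[simp]: "inner (z::pt) (0,1) = snd z" by (cases z) (simp add: inner_prod_def)

definition bb :: "(pt \<Rightarrow> pt \<Rightarrow> pt) \<Rightarrow> pt \<Rightarrow> pt \<Rightarrow> pt \<Rightarrow> real" where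
  "bb B u v q = inner (B q u) v"

locale hsetup =
  fixes B :: "pt \<Rightarrow> pt \<Rightarrow> pt" and V :: "pt \<Rightarrow> real"
    and D11 D12 D22 DV :: "pt list \<Rightarrow> pt \<Rightarrow> real"
  assumes B_lin: "\<forall>q. linear (B q)"
    and B_sym: "\<forall>q p p'. inner (B q p) p' = inner p (B q p')"
    and s11: "sfam UNIV (bb B (1,0) (1,0)) D11"
    and s12: "sfam UNIV (bb B (1,0) (0,1)) D12"
    and s22: "sfam UNIV (bb B (0,1) (0,1)) D22"
    and sV: "sfam UNIV V DV"
begin

abbreviation "H \<equiv> Ham B V"

lemma B_apply: "B q p = (fst p * D11 [] q + snd p * D12 [] q, fst p * D12 [] q + snd p * D22 [] q)"
proof -
  have l: "linear (B q)" using B_lin by blast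
  have p: "p = fst p *\<^sub>R (1,0) + snd p *\<^sub>R (0,1)" by (simp add: prod_eq_iff)
  have "B q (fst p *\<^sub>R (1,0) + snd p *\<^sub>R (0,1)) = fst p *\<^sub>R B q (1,0) + snd p *\<^sub>R B q (0,1)"
    by (simp only: linear_add[OF l] linear_scale[OF l])
  then have "B q p = fst p *\<^sub>R B q (1,0) + snd p *\<^sub>R B q (0,1)" using p by metis
  moreover have "B q (1,0) = (D11 [] q, D12 [] q)"
    using s11 s12 by (simp add: sfam_def bb_def prod_eq_iff)
  moreover have "B q (0,1) = (D12 [] q, D22 [] q)"
  proof -
    have "inner (B q (0,1)) (1,0) = inner (B q (1,0)) (0,1)"
      using B_sym by (metis inner_commute)
    then show ?thesis using s12 s22 by (simp add: sfam_def bb_def prod_eq_iff)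
  qed
  ultimately show ?thesis by (simp add: algebra_simps)
qed

lemma H_formula: "H (q,p) = (fst p * fst p * D11 [] q + 2 * fst p * snd p * D12 [] q
     + snd p * snd p * D22 [] q) / 2 + DV [] q"
proof -
  have "DV [] = V" using sV by (simp add: sfam_def)
  then show ?thesis by (simp add: Ham_def B_apply inner_prod_def algebra_simps)
qed


lemma sf_diff: "sfam UNIV f D \<Longrightarrow> D l differentiable (at x)"
  using sf_frechet[of UNIV f D x l] unfolding differentiable_def by auto

lemma comp_fst_diff: "g differentiable (at (fst x)) \<Longrightarrow> (\<lambda>x. g (fst x)) differentiable (at x)"
  using differentiable_compose[of g fst x] bounded_linear_imp_differentiable[OF bounded_linear_fst]
  by (auto simp: o_def)

lemma H_eq: "H = (\<lambda>x. (fst (snd x) * fst (snd x) * D11 [] (fst x) + 2 * fst (snd x) * snd (snd x) * D12 [] (fst x)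
     + snd (snd x) * snd (snd x) * D22 [] (fst x)) / 2 + DV [] (fst x))"
  by (rule ext) (metis H_formula prod.collapse)

lemma H_diff: "H differentiable (at x)"
proof -
  have a: "(\<lambda>x. D11 [] (fst x)) differentiable (at x)" "(\<lambda>x. D12 [] (fst x)) differentiable (at x)"
    "(\<lambda>x. D22 [] (fst x)) differentiable (at x)" "(\<lambda>x. DV [] (fst x)) differentiable (at x)"
    using comp_fst_diff sf_diff s11 s12 s22 sV by blast+
  have b: "(\<lambda>x. fst (snd x)) differentiable (at x)" "(\<lambda>x. snd (snd x)) differentiable (at x)"
    by (auto intro!: bounded_linear_imp_differentiable bounded_linear_compose[OF bounded_linear_fst bounded_linear_snd]
        bounded_linear_compose[OF bounded_linear_snd bounded_linear_snd])
  show ?thesis unfolding H_eq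
    by (intro differentiable_add differentiable_mult differentiable_divide differentiable_const a b) auto
qed

lemma H_deriv: "(H has_derivative (\<lambda>h. inner (grad H x) h)) (at x)"
proof -
  obtain L where L: "(H has_derivative L) (at x)" using H_diff unfolding differentiable_def by blast
  then have "L = (\<lambda>h. inner (grad H x) h)" using frechet_grad_inner[OF L] by auto
  then show ?thesis using L by simp
qed

lemma sf_line: "sfam UNIV f D \<Longrightarrow> b \<in> Basis \<Longrightarrow> ((\<lambda>t. D l (x + t *\<^sub>R b)) has_real_derivative D (b # l) x) (at 0)"
  unfolding sfam_def by blast

lemma H_pd_p1: "pd H ((0,0),(1,0)) (q,p) = fst p * D11 [] q + snd p * D12 [] q"
proof (rule pd_eqI)
  have e: "(\<lambda>t. H ((q,p) + t *\<^sub>R ((0,0),(1,0)))) = (\<lambda>t. ((fst p + t) * (fst p + t) * D11 [] q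
     + 2 * (fst p + t) * snd p * D12 [] q + snd p * snd p * D22 [] q) / 2 + DV [] q)"
    by (rule ext) (simp add: H_eq zero_prod_def)
  show "((\<lambda>t. H ((q,p) + t *\<^sub>R ((0,0),(1,0)))) has_real_derivative fst p * D11 [] q + snd p * D12 [] q) (at 0)"
    unfolding e by (auto intro!: derivative_eq_intros simp: algebra_simps)
qed

lemma H_pd_p2: "pd H ((0,0),(0,1)) (q,p) = fst p * D12 [] q + snd p * D22 [] q"
proof (rule pd_eqI)
  have e: "(\<lambda>t. H ((q,p) + t *\<^sub>R ((0,0),(0,1)))) = (\<lambda>t. (fst p * fst p * D11 [] q
     + 2 * fst p * (snd p + t) * D12 [] q + (snd p + t) * (snd p + t) * D22 [] q) / 2 + DV [] q)"
    by (rule ext) (simp add: H_eq zero_prod_def)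
  show "((\<lambda>t. H ((q,p) + t *\<^sub>R ((0,0),(0,1)))) has_real_derivative fst p * D12 [] q + snd p * D22 [] q) (at 0)"
    unfolding e by (auto intro!: derivative_eq_intros simp: algebra_simps)
qed

lemma H_pd_q:
  assumes b: "b \<in> (Basis::pt set)"
  shows "pd H (b,(0,0)) (q,p) = (fst p * fst p * D11 [b] q + 2 * fst p * snd p * D12 [b] q
     + snd p * snd p * D22 [b] q) / 2 + DV [b] q"
proof (rule pd_eqI)
  have e: "(\<lambda>t. H ((q,p) + t *\<^sub>R (b,(0,0)))) = (\<lambda>t. (fst p * fst p * D11 [] (q + t *\<^sub>R b)
     + 2 * fst p * snd p * D12 [] (q + t *\<^sub>R b) + snd p * snd p * D22 [] (q + t *\<^sub>R b)) / 2 + DV [] (q + t *\<^sub>R b))"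
    by (rule ext) (simp add: H_eq zero_prod_def)
  show "((\<lambda>t. H ((q,p) + t *\<^sub>R (b,(0,0)))) has_real_derivative (fst p * fst p * D11 [b] q + 2 * fst p * snd p * D12 [b] q
     + snd p * snd p * D22 [b] q) / 2 + DV [b] q) (at 0)"
    unfolding e
    by (auto intro!: derivative_eq_intros sf_line[OF s11 b] sf_line[OF s12 b] sf_line[OF s22 b] sf_line[OF sV b])
qed

lemma grad_H_snd: "snd (grad H (q,p)) = B q p"
  by (simp add: grad_st H_pd_p1 H_pd_p2 B_apply)

definition Hq :: "pt \<Rightarrow> st \<Rightarrow> real" where
  "Hq b \<equiv> \<lambda>(q,p). (fst p * fst p * D11 [b] q + 2 * fst p * snd p * D12 [b] q
     + snd p * snd p * D22 [b] q) / 2 + DV [b] q"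

lemma grad_H_fst: "fst (grad H (q,p)) = (Hq (1,0) (q,p), Hq (0,1) (q,p))"
  by (simp add: grad_st H_pd_q Basis_pt Hq_def)

lemma ham_vf_H: "ham_vf H x = (B (fst x) (snd x), - (Hq (1,0) x, Hq (0,1) x))"
  using grad_H_fst[of "fst x" "snd x"] grad_H_snd[of "fst x" "snd x"] by (simp add: ham_vf_def)

end

lemma inner_ham_vf: "inner (grad F x) (ham_vf F x) = 0"
  by (simp add: ham_vf_def inner_prod_def inner_commute)

context hsetup begin

lemma H_cont: "isCont H x"
  using H_diff differentiable_imp_continuous_within by blast

lemma H_along:
  assumes "(y has_vector_derivative ham_vf H (y t)) (at t within S)"
  shows "((\<lambda>t. H (y t)) has_real_derivative 0) (at t within S)"
proof -
  from has_derivative_compose[OF assms[unfolded has_vector_derivative_def] H_deriv]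
  have "((\<lambda>t. H (y t)) has_derivative (\<lambda>h. inner (grad H (y t)) (h *\<^sub>R ham_vf H (y t)))) (at t within S)" .
  moreover have "(\<lambda>h. inner (grad H (y t)) (h *\<^sub>R ham_vf H (y t))) = (*) 0"
    by (rule ext) (simp add: inner_ham_vf)
  ultimately show ?thesis by (simp add: has_field_derivative_def)
qed

lemma energy_u:
  assumes "x \<in> Wu_loc H E N"
  shows "H x = H E"
proof -
  from assms obtain y where y0: "y 0 = x"
    and yd: "\<And>t. t \<le> 0 \<Longrightarrow> (y has_vector_derivative ham_vf H (y t)) (at t within {..0})"
    and ylim: "(y \<longlongrightarrow> E) at_bot"
    unfolding Wu_loc_def by blast
  have "\<And>t. t \<in> {..0} \<Longrightarrow> ((\<lambda>t. H (y t)) has_real_derivative 0) (at t within {..0})"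
    using H_along yd by auto
  from has_field_derivative_zero_constant[OF convex_real_interval(2) this]
  obtain c where c: "\<And>t. t \<le> 0 \<Longrightarrow> H (y t) = c" by auto
  have lim: "((\<lambda>t. H (y t)) \<longlongrightarrow> H E) at_bot"
    using isCont_tendsto_compose[OF H_cont ylim] .
  moreover have ev: "\<forall>\<^sub>F t in at_bot. H (y t) = c"
    using c eventually_at_bot_linorder by blast
  ultimately have "((\<lambda>t::real. c) \<longlongrightarrow> H E) at_bot" using iffD1[OF tendsto_cong[OF ev] lim] by simp
  then have "c = H E" by (metis tendsto_const_iff trivial_limit_at_bot_linorder)
  then show ?thesis using c[of 0] y0 by simp
qed

lemma energy_s:
  assumes "x \<in> Ws_loc H E N"
  shows "H x = H E"
proof -
  from assms obtain y where y0: "y 0 = x"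
    and yd: "\<And>t. t \<ge> 0 \<Longrightarrow> (y has_vector_derivative ham_vf H (y t)) (at t within {0..})"
    and ylim: "(y \<longlongrightarrow> E) at_top"
    unfolding Ws_loc_def by blast
  have "\<And>t. t \<in> {0..} \<Longrightarrow> ((\<lambda>t. H (y t)) has_real_derivative 0) (at t within {0..})"
    using H_along yd by auto
  from has_field_derivative_zero_constant[OF convex_real_interval(1) this]
  obtain c where c: "\<And>t. t \<ge> 0 \<Longrightarrow> H (y t) = c" by auto
  have lim: "((\<lambda>t. H (y t)) \<longlongrightarrow> H E) at_top"
    using isCont_tendsto_compose[OF H_cont ylim] .
  moreover have ev: "\<forall>\<^sub>F t in at_top. H (y t) = c"
    using c eventually_at_top_linorder by blast
  ultimately have "((\<lambda>t::real. c) \<longlongrightarrow> H E) at_top" using iffD1[OF tendsto_cong[OF ev] lim] by simp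
  then have "c = H E" by (metis tendsto_const_iff trivial_limit_at_top_linorder)
  then show ?thesis using c[of 0] y0 by simp
qed

end

lemma ev_in_open:
  assumes "continuous (at t) u" "open U" "u t \<in> U"
  shows "\<forall>\<^sub>F s in nhds t. u s \<in> U"
proof -
  obtain S where "open S" "t \<in> S" "\<forall>x'\<in>S. u x' \<in> U"
    using assms continuous_at_open by metis
  then show ?thesis unfolding eventually_nhds by blast
qed

context hsetup begin

lemma hj_curve:
  assumes sf: "sfam U f D" and U: "open U" and SU: "\<And>y. y \<in> U \<Longrightarrow> S y = f y"
    and HJ: "\<And>y. y \<in> U \<Longrightarrow> H (y, grad S y) = 0"
    and ud: "(u has_vector_derivative B (u t) (grad S (u t))) (at t)"
    and ut: "u t \<in> U"
  shows "((\<lambda>s. (u s, grad S (u s))) has_vector_derivative ham_vf H (u t, grad S (u t))) (at t)"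
proof -
  define q where "q = u t"
  define g where "g y = (D [(1,0)] y, D [(0,1)] y)" for y
  have gS: "grad S y = g y" if "y \<in> U" for y
  proof -
    have "grad S y = grad f y" by (rule grad_local[OF U that SU])
    also have "\<dots> = g y" using sf_grad[OF sf that] by (simp add: g_def)
    finally show ?thesis .
  qed
  have q: "q \<in> U" using ut by (simp add: q_def)
  define J where "J h = (fst h * D [(1,0),(1,0)] q + snd h * D [(0,1),(1,0)] q,
                         fst h * D [(1,0),(0,1)] q + snd h * D [(0,1),(0,1)] q)" for h
  have gd: "(g has_derivative J) (at q)"
  proof -
    have "(D [(1,0)] has_derivative (\<lambda>h. fst h * D [(1,0),(1,0)] q + snd h * D [(0,1),(1,0)] q)) (at q)"
      using sf_frechet[OF sf U q, of "[(1,0)]"] by simp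
    moreover have "(D [(0,1)] has_derivative (\<lambda>h. fst h * D [(1,0),(0,1)] q + snd h * D [(0,1),(0,1)] q)) (at q)"
      using sf_frechet[OF sf U q, of "[(0,1)]"] by simp
    ultimately show ?thesis unfolding g_def[abs_def] J_def[abs_def] by (rule has_derivative_Pair)
  qed
  have lin: "linear J" using gd has_derivative_linear by blast
  have sym: "inner w (J h) = inner (J w) h" for w h
    using clairaut[OF sf U q] by (simp add: J_def inner_prod_def algebra_simps)
  define gH where "gH = grad H (q, g q)"
  have Hp: "snd gH = B q (g q)" by (simp add: gH_def grad_H_snd)
  have "((\<lambda>y. H (y, g y)) has_derivative (\<lambda>h. inner gH (h, J h))) (at q)"
  proof -
    have "((\<lambda>y. (y, g y)) has_derivative (\<lambda>h. (h, J h))) (at q)"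
      by (intro has_derivative_Pair has_derivative_ident gd)
    from has_derivative_compose[OF this H_deriv] show ?thesis by (simp add: gH_def)
  qed
  moreover have "((\<lambda>y. H (y, g y)) has_derivative (\<lambda>h. 0)) (at q)"
  proof -
    have "((\<lambda>y. 0::real) has_derivative (\<lambda>h. 0)) (at q)" by simp
    then show ?thesis
      by (rule has_derivative_transform_within_open[OF _ U q]) (use HJ gS in auto)
  qed
  ultimately have z: "inner gH (h, J h) = 0" for h using has_derivative_unique by metis
  have JH: "J (snd gH) = - fst gH"
  proof -
    have "inner (J (snd gH) + fst gH) h = 0" for h
    proof -
      have "inner gH (h, J h) = inner (fst gH) h + inner (snd gH) (J h)"
        by (metis inner_Pair prod.collapse)
      then show ?thesis using z[of h] sym[of "snd gH" h] by (simp add: inner_add_left inner_add_right inner_commute)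
    qed
    from this[of "J (snd gH) + fst gH"] show ?thesis by (simp add: eq_neg_iff_add_eq_0)
  qed
  have uc: "continuous (at t) u" using ud has_vector_derivative_continuous by blast
  have ev: "\<forall>\<^sub>F s in nhds t. u s \<in> U" using ev_in_open[OF uc U ut] .
  have ugS: "u' = B (u t) (grad S (u t)) \<Longrightarrow> u' = snd gH" for u'
    using Hp gS[OF q] by (simp add: q_def)
  have d1: "((\<lambda>s. g (u s)) has_vector_derivative J (snd gH)) (at t)"
  proof -
    have "(u has_derivative (\<lambda>h. h *\<^sub>R snd gH)) (at t)"
      using ud ugS by (simp add: has_vector_derivative_def)
    from has_derivative_compose[OF this gd[unfolded q_def]]
    have "((\<lambda>s. g (u s)) has_derivative (\<lambda>h. J (h *\<^sub>R snd gH))) (at t)" .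
    then show ?thesis using lin by (simp add: has_vector_derivative_def linear_scale)
  qed
  have d2: "((\<lambda>s. grad S (u s)) has_vector_derivative J (snd gH)) (at t)"
  proof -
    have "\<forall>\<^sub>F s in nhds t. s \<in> UNIV \<longrightarrow> grad S (u s) = g (u s)"
      using ev by eventually_elim (use gS in auto)
    moreover have "grad S (u t) = g (u t)" using gS ut by auto
    ultimately show ?thesis using has_vector_derivative_cong_ev[where S=UNIV and x=t and f="\<lambda>s. grad S (u s)" and g="\<lambda>s. g (u s)"] d1 by auto
  qed
  have "((\<lambda>s. (u s, grad S (u s))) has_vector_derivative (snd gH, - fst gH)) (at t)"
    using has_vector_derivative_Pair[OF ud d2] ugS JH by simp
  moreover have "ham_vf H (u t, grad S (u t)) = (snd gH, - fst gH)"
    using gS[OF q] by (simp add: ham_vf_def gH_def q_def)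
  ultimately show ?thesis by simp
qed

end

lemma ode_unique_fwd:
  fixes F :: "'a::real_inner \<Rightarrow> 'a"
  assumes lip: "\<And>R. \<exists>K. \<forall>x y. norm x \<le> R \<longrightarrow> norm y \<le> R \<longrightarrow> norm (F x - F y) \<le> K * norm (x - y)"
    and y1: "\<And>t. (Y1 has_vector_derivative F (Y1 t)) (at t)"
    and y2: "\<And>t. (Y2 has_vector_derivative F (Y2 t)) (at t)"
    and eq0: "Y1 0 = Y2 0" and T: "T \<ge> 0"
  shows "Y1 T = Y2 T"
proof -
  have c1: "continuous_on {0..T} Y1" using y1
    by (meson continuous_at_imp_continuous_on has_vector_derivative_continuous)
  have c2: "continuous_on {0..T} Y2" using y2
    by (meson continuous_at_imp_continuous_on has_vector_derivative_continuous)
  have "bounded (Y1 ` {0..T})" using compact_imp_bounded[OF compact_continuous_image[OF c1 compact_Icc]] .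
  then obtain R1 where "\<forall>x\<in>Y1 ` {0..T}. norm x \<le> R1" unfolding bounded_iff by blast
  then have R1: "\<And>t. t \<in> {0..T} \<Longrightarrow> norm (Y1 t) \<le> R1" by blast
  have "bounded (Y2 ` {0..T})" using compact_imp_bounded[OF compact_continuous_image[OF c2 compact_Icc]] .
  then obtain R2 where "\<forall>x\<in>Y2 ` {0..T}. norm x \<le> R2" unfolding bounded_iff by blast
  then have R2: "\<And>t. t \<in> {0..T} \<Longrightarrow> norm (Y2 t) \<le> R2" by blast
  obtain K0 where K0: "\<And>x y. norm x \<le> max R1 R2 \<Longrightarrow> norm y \<le> max R1 R2 \<Longrightarrow> norm (F x - F y) \<le> K0 * norm (x - y)"
    using lip by blast
  define K where "K = max K0 0"
  have K: "norm (F x - F y) \<le> K * norm (x - y)" if "norm x \<le> max R1 R2" "norm y \<le> max R1 R2" for x y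
  proof -
    have "K0 * norm (x - y) \<le> K * norm (x - y)" by (simp add: K_def mult_right_mono)
    then show ?thesis using K0[OF that] by linarith
  qed
  have "K \<ge> 0" by (simp add: K_def)
  define w where "w t = Y1 t - Y2 t" for t
  define \<phi> where "\<phi> t = exp (- 2 * K * t) * inner (w t) (w t)" for t
  have wd: "(w has_vector_derivative (F (Y1 t) - F (Y2 t))) (at t)" for t
    unfolding w_def[abs_def] by (intro has_vector_derivative_diff y1 y2)
  have "\<exists>y. DERIV \<phi> t :> y \<and> y \<le> 0" if t: "0 \<le> t" "t \<le> T" for t
  proof -
    define w' where "w' = F (Y1 t) - F (Y2 t)"
    have "(w has_derivative (\<lambda>h. h *\<^sub>R w')) (at t)"
      using wd[of t] by (simp add: has_vector_derivative_def w'_def)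
    from has_derivative_inner[OF this this]
    have "((\<lambda>t. inner (w t) (w t)) has_derivative (\<lambda>h. inner (w t) (h *\<^sub>R w') + inner (h *\<^sub>R w') (w t))) (at t)" .
    moreover have "(\<lambda>h. inner (w t) (h *\<^sub>R w') + inner (h *\<^sub>R w') (w t)) = (*) (2 * inner (w t) w')"
      by (rule ext) (simp add: inner_commute algebra_simps)
    ultimately have ii: "((\<lambda>t. inner (w t) (w t)) has_real_derivative 2 * inner (w t) w') (at t)"
      by (simp add: has_field_derivative_def)
    have ex: "((\<lambda>t. exp (- 2 * K * t)) has_real_derivative exp (- 2 * K * t) * (- 2 * K)) (at t)"
      by (auto intro!: derivative_eq_intros)
    have d: "DERIV \<phi> t :> exp (- 2 * K * t) * (- 2 * K) * inner (w t) (w t) + exp (- 2 * K * t) * (2 * inner (w t) w')"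
      using DERIV_mult[OF ex ii] unfolding \<phi>_def[abs_def] by (simp add: algebra_simps)
    have "inner (w t) w' \<le> norm (w t) * norm w'" by (rule norm_cauchy_schwarz)
    also have "norm w' \<le> K * norm (w t)"
      unfolding w'_def w_def using K R1[of t] R2[of t] t by auto
    then have "norm (w t) * norm w' \<le> norm (w t) * (K * norm (w t))"
      by (simp add: mult_left_mono)
    finally have "inner (w t) w' \<le> K * inner (w t) (w t)"
      by (simp add: power2_norm_eq_inner[symmetric] power2_eq_square algebra_simps)
    then have "exp (- 2 * K * t) * (- 2 * K) * inner (w t) (w t) + exp (- 2 * K * t) * (2 * inner (w t) w') \<le> 0"
    proof -
      assume a: "inner (w t) w' \<le> K * inner (w t) (w t)"
      have "exp (- 2 * K * t) * (- 2 * K) * inner (w t) (w t) + exp (- 2 * K * t) * (2 * inner (w t) w')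
         = 2 * exp (- 2 * K * t) * (inner (w t) w' - K * inner (w t) (w t))" by (simp add: algebra_simps)
      also have "\<dots> \<le> 0" using a by (simp add: mult_nonneg_nonpos)
      finally show ?thesis .
    qed
    with d show ?thesis by blast
  qed
  from DERIV_nonpos_imp_nonincreasing[OF T this]
  have "\<phi> T \<le> \<phi> 0" by blast
  moreover have "\<phi> 0 = 0" using eq0 by (simp add: \<phi>_def w_def)
  ultimately have "inner (w T) (w T) \<le> 0" by (simp add: \<phi>_def mult_le_0_iff)
  then have "w T = 0" using inner_ge_zero[of "w T"] inner_eq_zero_iff[of "w T"] by linarith
  then show ?thesis by (simp add: w_def)
qed

lemma ode_unique:
  fixes F :: "'a::real_inner \<Rightarrow> 'a"
  assumes lip: "\<And>R. \<exists>K. \<forall>x y. norm x \<le> R \<longrightarrow> norm y \<le> R \<longrightarrow> norm (F x - F y) \<le> K * norm (x - y)"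
    and y1: "\<And>t. (Y1 has_vector_derivative F (Y1 t)) (at t)"
    and y2: "\<And>t. (Y2 has_vector_derivative F (Y2 t)) (at t)"
    and eq0: "Y1 0 = Y2 0"
  shows "Y1 T = Y2 T"
proof (cases "T \<ge> 0")
  case True then show ?thesis using ode_unique_fwd[OF lip y1 y2 eq0] by blast
next
  case False
  have lip': "\<exists>K. \<forall>x y. norm x \<le> R \<longrightarrow> norm y \<le> R \<longrightarrow> norm ((- F x) - (- F y)) \<le> K * norm (x - y)" for R
  proof -
    obtain K where K: "\<forall>x y. norm x \<le> R \<longrightarrow> norm y \<le> R \<longrightarrow> norm (F x - F y) \<le> K * norm (x - y)"
      using lip[of R] by blast
    have "norm ((- F x) - (- F y)) = norm (F x - F y)" for x y
      by (simp add: norm_minus_commute)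
    then show ?thesis using K by (intro exI[of _ K]) auto
  qed
  have r: "((\<lambda>t. Y (- t)) has_vector_derivative - F (Y (- t))) (at t)"
    if "\<And>t. (Y has_vector_derivative F (Y t)) (at t)" for Y :: "real \<Rightarrow> 'a" and t
  proof -
    have m: "(uminus has_vector_derivative (-1)) (at t)" by (auto intro!: derivative_eq_intros)
    have "(Y has_vector_derivative F (Y (- t))) (at (uminus t) within uminus ` UNIV)"
      using that[of "-t"] by simp
    from vector_diff_chain_within[OF m this] show ?thesis by (simp add: o_def)
  qed
  have "(\<lambda>t. Y1 (- t)) (- T) = (\<lambda>t. Y2 (- t)) (- T)"
    by (rule ode_unique_fwd[where F="\<lambda>x. - F x", OF lip' r[OF y1] r[OF y2]]) (use eq0 False in auto)
  then show ?thesis by simp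
qed

definition BLip :: "'a::real_normed_vector set \<Rightarrow> ('a \<Rightarrow> real) \<Rightarrow> bool" where
  "BLip S f \<longleftrightarrow> (\<exists>K. \<forall>x\<in>S. \<forall>y\<in>S. \<bar>f x - f y\<bar> \<le> K * norm (x - y) \<and> \<bar>f x\<bar> \<le> K)"

lemma BLipD: "BLip S f \<Longrightarrow> \<exists>K\<ge>0. \<forall>x\<in>S. \<forall>y\<in>S. \<bar>f x - f y\<bar> \<le> K * norm (x - y) \<and> \<bar>f x\<bar> \<le> K"
proof -
  assume "BLip S f"
  then obtain K where K: "\<forall>x\<in>S. \<forall>y\<in>S. \<bar>f x - f y\<bar> \<le> K * norm (x - y) \<and> \<bar>f x\<bar> \<le> K"
    unfolding BLip_def by blast
  have "\<forall>x\<in>S. \<forall>y\<in>S. \<bar>f x - f y\<bar> \<le> max K 0 * norm (x - y) \<and> \<bar>f x\<bar> \<le> max K 0"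
  proof (intro ballI conjI)
    fix x y assume "x \<in> S" "y \<in> S"
    have "K * norm (x - y) \<le> max K 0 * norm (x - y)" by (simp add: mult_right_mono)
    then show "\<bar>f x - f y\<bar> \<le> max K 0 * norm (x - y)" using K \<open>x\<in>S\<close> \<open>y\<in>S\<close> by fastforce
    show "\<bar>f x\<bar> \<le> max K 0" using K \<open>x\<in>S\<close> by fastforce
  qed
  then show ?thesis by (intro exI[of _ "max K 0"]) auto
qed

lemma BLip_const: "BLip S (\<lambda>x. c)"
  unfolding BLip_def by (intro exI[of _ "\<bar>c\<bar>"]) auto

lemma BLip_add: "BLip S f \<Longrightarrow> BLip S g \<Longrightarrow> BLip S (\<lambda>x. f x + g x)"
proof -
  assume "BLip S f" "BLip S g"
  then obtain K1 K2 where K1: "K1 \<ge> 0" "\<forall>x\<in>S. \<forall>y\<in>S. \<bar>f x - f y\<bar> \<le> K1 * norm (x - y) \<and> \<bar>f x\<bar> \<le> K1"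
    and K2: "K2 \<ge> 0" "\<forall>x\<in>S. \<forall>y\<in>S. \<bar>g x - g y\<bar> \<le> K2 * norm (x - y) \<and> \<bar>g x\<bar> \<le> K2"
    using BLipD by metis
  show ?thesis unfolding BLip_def
  proof (intro exI[of _ "K1 + K2"] ballI conjI)
    fix x y assume xy: "x \<in> S" "y \<in> S"
    have "\<bar>f x + g x - (f y + g y)\<bar> \<le> \<bar>f x - f y\<bar> + \<bar>g x - g y\<bar>" by linarith
    also have "\<dots> \<le> K1 * norm (x - y) + K2 * norm (x - y)" using K1 K2 xy by (meson add_mono)
    finally show "\<bar>f x + g x - (f y + g y)\<bar> \<le> (K1 + K2) * norm (x - y)" by (simp add: algebra_simps)
    show "\<bar>f x + g x\<bar> \<le> K1 + K2" using K1 K2 xy by (smt (verit))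
  qed
qed

lemma BLip_minus: "BLip S f \<Longrightarrow> BLip S (\<lambda>x. - f x)"
  unfolding BLip_def by (metis abs_minus_cancel minus_diff_minus abs_minus_commute)

lemma BLip_mult: "BLip S f \<Longrightarrow> BLip S g \<Longrightarrow> BLip S (\<lambda>x. f x * g x)"
proof -
  assume "BLip S f" "BLip S g"
  then obtain K1 K2 where K1: "K1 \<ge> 0" "\<forall>x\<in>S. \<forall>y\<in>S. \<bar>f x - f y\<bar> \<le> K1 * norm (x - y) \<and> \<bar>f x\<bar> \<le> K1"
    and K2: "K2 \<ge> 0" "\<forall>x\<in>S. \<forall>y\<in>S. \<bar>g x - g y\<bar> \<le> K2 * norm (x - y) \<and> \<bar>g x\<bar> \<le> K2"
    using BLipD by metis
  show ?thesis unfolding BLip_def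
  proof (intro exI[of _ "2 * K1 * K2 + K1 * K2"] ballI conjI)
    fix x y assume xy: "x \<in> S" "y \<in> S"
    have "f x * g x - f y * g y = f x * (g x - g y) + (f x - f y) * g y" by (simp add: algebra_simps)
    then have "\<bar>f x * g x - f y * g y\<bar> \<le> \<bar>f x\<bar> * \<bar>g x - g y\<bar> + \<bar>f x - f y\<bar> * \<bar>g y\<bar>"
      by (metis abs_mult abs_triangle_ineq)
    also have "\<dots> \<le> K1 * (K2 * norm (x - y)) + (K1 * norm (x - y)) * K2"
      using K1 K2 xy by (intro add_mono mult_mono) auto
    also have "\<dots> \<le> (2 * K1 * K2 + K1 * K2) * norm (x - y)"
      using K1 K2 by (simp add: algebra_simps mult_nonneg_nonneg)
    finally show "\<bar>f x * g x - f y * g y\<bar> \<le> (2 * K1 * K2 + K1 * K2) * norm (x - y)" .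
    have "\<bar>f x * g x\<bar> \<le> K1 * K2" using K1 K2 xy by (simp add: abs_mult mult_mono)
    then show "\<bar>f x * g x\<bar> \<le> 2 * K1 * K2 + K1 * K2" using K1 K2 by (simp add: mult_nonneg_nonneg)
  qed
qed

lemma BLip_comp_lin:
  assumes "BLip T g" "\<And>x. x \<in> S \<Longrightarrow> h x \<in> T" "\<And>x y. norm (h x - h y) \<le> norm (x - y)"
  shows "BLip S (\<lambda>x. g (h x))"
proof -
  obtain K where K: "K \<ge> 0" "\<forall>x\<in>T. \<forall>y\<in>T. \<bar>g x - g y\<bar> \<le> K * norm (x - y) \<and> \<bar>g x\<bar> \<le> K"
    using BLipD[OF assms(1)] by metis
  show ?thesis unfolding BLip_def
  proof (intro exI[of _ K] ballI conjI)
    fix x y assume xy: "x \<in> S" "y \<in> S"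
    have "\<bar>g (h x) - g (h y)\<bar> \<le> K * norm (h x - h y)" using K assms(2) xy by blast
    also have "\<dots> \<le> K * norm (x - y)" using K assms(3) by (simp add: mult_left_mono)
    finally show "\<bar>g (h x) - g (h y)\<bar> \<le> K * norm (x - y)" .
    show "\<bar>g (h x)\<bar> \<le> K" using K assms(2) xy by blast
  qed
qed

lemma BLip_sf:
  assumes sf: "sfam UNIV f D"
  shows "BLip (cball 0 R) (D l)"
proof -
  have cont: "continuous_on (cball 0 R) (D l')" for l' using sf_cont[OF sf] continuous_on_subset by blast
  have bnd: "\<exists>M. \<forall>x\<in>cball 0 R. \<bar>D l' x\<bar> \<le> M" for l'
  proof -
    have "bounded (D l' ` cball 0 R)" by (rule compact_imp_bounded[OF compact_continuous_image[OF cont compact_cball]])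
    then show ?thesis unfolding bounded_iff by auto
  qed
  obtain M0 where M0: "\<forall>x\<in>cball 0 R. \<bar>D l x\<bar> \<le> M0" using bnd by blast
  obtain M1 where M1: "\<forall>x\<in>cball 0 R. \<bar>D ((1,0)#l) x\<bar> \<le> M1" using bnd by blast
  obtain M2 where M2: "\<forall>x\<in>cball 0 R. \<bar>D ((0,1)#l) x\<bar> \<le> M2" using bnd by blast
  have der: "(D l has_derivative (\<lambda>h. fst h * D ((1,0)#l) x + snd h * D ((0,1)#l) x)) (at x within cball 0 R)" for x
    using sf_frechet[OF sf open_UNIV, of x l] has_derivative_at_withinI by auto
  have on: "onorm (\<lambda>h. fst h * D ((1,0)#l) x + snd h * D ((0,1)#l) x) \<le> M1 + M2" if "x \<in> cball 0 R" for x
  proof (rule onorm_le)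
    fix h :: pt
    have "norm (fst h * D ((1,0)#l) x + snd h * D ((0,1)#l) x) \<le> \<bar>fst h\<bar> * \<bar>D ((1,0)#l) x\<bar> + \<bar>snd h\<bar> * \<bar>D ((0,1)#l) x\<bar>"
      by (simp add: abs_mult[symmetric] abs_triangle_ineq)
    also have "\<dots> \<le> norm h * M1 + norm h * M2"
    proof (intro add_mono mult_mono)
      show "\<bar>fst h\<bar> \<le> norm h" using norm_fst_le[of "fst h" "snd h"] by simp
      show "\<bar>snd h\<bar> \<le> norm h" using norm_snd_le[of "snd h" "fst h"] by simp
    qed (use M1 M2 that in auto)
    finally show "norm (fst h * D ((1,0)#l) x + snd h * D ((0,1)#l) x) \<le> (M1 + M2) * norm h"
      by (simp add: algebra_simps)
  qed
  show ?thesis unfolding BLip_def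
  proof (intro exI[of _ "max (M1 + M2) M0"] ballI conjI)
    fix x y assume xy: "x \<in> cball (0::pt) R" "y \<in> cball (0::pt) R"
    have "norm (D l x - D l y) \<le> (M1 + M2) * norm (x - y)"
      by (rule differentiable_bound[OF convex_cball der on xy])
    moreover have "(M1 + M2) * norm (x - y) \<le> max (M1 + M2) M0 * norm (x - y)"
      by (simp add: mult_right_mono)
    ultimately show "\<bar>D l x - D l y\<bar> \<le> max (M1 + M2) M0 * norm (x - y)" by simp
    show "\<bar>D l x\<bar> \<le> max (M1 + M2) M0" using M0 xy by fastforce
  qed
qed

lemma BLip_fst: "BLip (cball (0::pt) R) fst"
  unfolding BLip_def
proof (intro exI[of _ "max 1 R"] ballI conjI)
  fix x y :: pt assume "x \<in> cball 0 R" "y \<in> cball 0 R"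
  have "\<bar>fst (x - y)\<bar> \<le> norm (x - y)" by (metis norm_fst_le prod.collapse real_norm_def)
  then have "\<bar>fst x - fst y\<bar> \<le> norm (x - y)" by simp
  also have "\<dots> \<le> max 1 R * norm (x - y)" using mult_right_mono[of 1 "max 1 R" "norm (x-y)"] by simp
  finally show "\<bar>fst x - fst y\<bar> \<le> max 1 R * norm (x - y)" .
  have "\<bar>fst x\<bar> \<le> norm x" using norm_fst_le[of "fst x" "snd x"] by simp
  then show "\<bar>fst x\<bar> \<le> max 1 R" using \<open>x \<in> cball 0 R\<close> by simp
qed

lemma BLip_snd: "BLip (cball (0::pt) R) snd"
  unfolding BLip_def
proof (intro exI[of _ "max 1 R"] ballI conjI)
  fix x y :: pt assume "x \<in> cball 0 R" "y \<in> cball 0 R"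
  have "\<bar>snd (x - y)\<bar> \<le> norm (x - y)" by (metis norm_snd_le prod.collapse real_norm_def)
  then have "\<bar>snd x - snd y\<bar> \<le> norm (x - y)" by simp
  also have "\<dots> \<le> max 1 R * norm (x - y)" using mult_right_mono[of 1 "max 1 R" "norm (x-y)"] by simp
  finally show "\<bar>snd x - snd y\<bar> \<le> max 1 R * norm (x - y)" .
  have "\<bar>snd x\<bar> \<le> norm x" using norm_snd_le[of "snd x" "fst x"] by simp
  then show "\<bar>snd x\<bar> \<le> max 1 R" using \<open>x \<in> cball 0 R\<close> by simp
qed

lemma BLip_onfst: "BLip (cball (0::pt) R) g \<Longrightarrow> BLip (cball (0::st) R) (\<lambda>x. g (fst x))"
  by (rule BLip_comp_lin) (auto intro: order_trans[OF norm_fst_le] simp: norm_fst_le[of "fst _ - fst _" "snd _ - snd _", simplified])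

lemma BLip_onsnd: "BLip (cball (0::pt) R) g \<Longrightarrow> BLip (cball (0::st) R) (\<lambda>x. g (snd x))"
  by (rule BLip_comp_lin) (auto intro: order_trans[OF norm_snd_le] simp: norm_snd_le[of "snd _ - snd _" "fst _ - fst _", simplified])

lemma norm_st_le: "norm (((a,b),(c,d))::st) \<le> \<bar>a\<bar> + \<bar>b\<bar> + \<bar>c\<bar> + \<bar>d\<bar>"
proof -
  have "norm (((a,b),(c,d))::st) \<le> norm (a,b) + norm (c,d)" by (rule norm_Pair_le)
  also have "\<dots> \<le> (\<bar>a\<bar> + \<bar>b\<bar>) + (\<bar>c\<bar> + \<bar>d\<bar>)"
    using norm_Pair_le[of a b] norm_Pair_le[of c d] by (intro add_mono) auto
  finally show ?thesis by simp
qed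

context hsetup begin

lemma ham_vf_lip: "\<exists>K. \<forall>x y. norm x \<le> R \<longrightarrow> norm y \<le> R \<longrightarrow> norm (ham_vf H x - ham_vf H y) \<le> K * norm (x - y)"
proof -
  let ?S = "cball (0::st) R"
  have p1: "BLip ?S (\<lambda>x. fst (snd x))" by (rule BLip_onsnd[OF BLip_fst])
  have p2: "BLip ?S (\<lambda>x. snd (snd x))" by (rule BLip_onsnd[OF BLip_snd])
  have c: "BLip ?S (\<lambda>x. Dd l (fst x))" if "sfam UNIV g Dd" for g Dd l
    by (rule BLip_onfst[OF BLip_sf[OF that]])
  define c1 where "c1 x = fst (snd x) * D11 [] (fst x) + snd (snd x) * D12 [] (fst x)" for x :: st
  define c2 where "c2 x = fst (snd x) * D12 [] (fst x) + snd (snd x) * D22 [] (fst x)" for x :: st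
  define c3 where "c3 b x = - ((fst (snd x) * fst (snd x) * D11 [b] (fst x) + 2 * fst (snd x) * snd (snd x) * D12 [b] (fst x)
     + snd (snd x) * snd (snd x) * D22 [b] (fst x)) * (1/2) + DV [b] (fst x))" for b and x :: st
  have l1: "BLip ?S c1" unfolding c1_def[abs_def]
    by (intro BLip_add BLip_mult p1 p2 c[OF s11] c[OF s12] c[OF s22] c[OF sV])
  have l2: "BLip ?S c2" unfolding c2_def[abs_def]
    by (intro BLip_add BLip_mult p1 p2 c[OF s11] c[OF s12] c[OF s22] c[OF sV])
  have l3: "BLip ?S (c3 b)" for b unfolding c3_def[abs_def]
    by (intro BLip_minus BLip_add BLip_mult p1 p2 c[OF s11] c[OF s12] c[OF s22] c[OF sV] BLip_const)
  have hv: "ham_vf H x = ((c1 x, c2 x), (c3 (1,0) x, c3 (0,1) x))" for x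
    by (simp add: ham_vf_H B_apply c1_def c2_def c3_def Hq_def case_prod_beta')
  obtain K1 where K1: "\<forall>x\<in>?S. \<forall>y\<in>?S. \<bar>c1 x - c1 y\<bar> \<le> K1 * norm (x - y)" using l1 unfolding BLip_def by blast
  obtain K2 where K2: "\<forall>x\<in>?S. \<forall>y\<in>?S. \<bar>c2 x - c2 y\<bar> \<le> K2 * norm (x - y)" using l2 unfolding BLip_def by blast
  obtain K3 where K3: "\<forall>x\<in>?S. \<forall>y\<in>?S. \<bar>c3 (1,0) x - c3 (1,0) y\<bar> \<le> K3 * norm (x - y)" using l3 unfolding BLip_def by blast
  obtain K4 where K4: "\<forall>x\<in>?S. \<forall>y\<in>?S. \<bar>c3 (0,1) x - c3 (0,1) y\<bar> \<le> K4 * norm (x - y)" using l3 unfolding BLip_def by blast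
  show ?thesis
  proof (intro exI[of _ "K1 + K2 + K3 + K4"] allI impI)
    fix x y :: st assume "norm x \<le> R" "norm y \<le> R"
    then have xy: "x \<in> ?S" "y \<in> ?S" by auto
    have "norm (ham_vf H x - ham_vf H y) \<le> \<bar>c1 x - c1 y\<bar> + \<bar>c2 x - c2 y\<bar> + \<bar>c3 (1,0) x - c3 (1,0) y\<bar> + \<bar>c3 (0,1) x - c3 (0,1) y\<bar>"
      using norm_st_le by (simp add: hv)
    also have "\<dots> \<le> K1 * norm (x - y) + K2 * norm (x - y) + K3 * norm (x - y) + K4 * norm (x - y)"
      using K1 K2 K3 K4 xy by (intro add_mono) auto
    finally show "norm (ham_vf H x - ham_vf H y) \<le> (K1 + K2 + K3 + K4) * norm (x - y)"
      by (simp add: algebra_simps)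
  qed
qed

end

lemma diff_line:
  assumes "(f has_derivative L) (at x)"
  shows "((\<lambda>t. f (x + t *\<^sub>R b)) has_real_derivative L b) (at 0)"
proof -
  have lin: "linear L" using assms has_derivative_linear by blast
  have "((\<lambda>t::real. x + t *\<^sub>R b) has_derivative (\<lambda>t. t *\<^sub>R b)) (at 0)"
    by (auto intro!: derivative_eq_intros)
  from has_derivative_compose[OF this] assms
  have "((\<lambda>t. f (x + t *\<^sub>R b)) has_derivative (\<lambda>t. L (t *\<^sub>R b))) (at 0)" by simp
  moreover have "(\<lambda>t. L (t *\<^sub>R b)) = (*) (L b)"
    using lin by (auto simp: linear_scale)
  ultimately show ?thesis by (simp add: has_field_derivative_def)
qed

lemma pd_inner_basis:
  fixes f :: "'a::euclidean_space \<Rightarrow> real"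
  assumes "e \<in> Basis" shows "inner (grad f x) e = pd f e x"
proof -
  have "inner (grad f x) e = (\<Sum>b\<in>Basis. pd f b x * inner b e)"
    by (simp add: grad_def inner_sum_left)
  also have "\<dots> = (\<Sum>b\<in>{e}. pd f b x * inner b e)"
    using assms by (intro sum.mono_neutral_right) (auto simp: inner_Basis)
  finally show ?thesis using assms by simp
qed

lemma line_const:
  fixes k :: "'a::real_normed_vector \<Rightarrow> real"
  assumes "\<And>y. ((\<lambda>t. k (y + t *\<^sub>R e)) has_real_derivative 0) (at 0)"
  shows "k (y + s *\<^sub>R e) = k y"
proof -
  have "DERIV (\<lambda>t. k (y + t *\<^sub>R e)) t :> 0" for t
  proof -
    have "((\<lambda>s. k ((y + t *\<^sub>R e) + s *\<^sub>R e)) has_real_derivative 0) (at 0)" by (rule assms)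
    then have "((\<lambda>s. k (y + (s + t) *\<^sub>R e)) has_real_derivative 0) (at 0)"
      by (simp add: algebra_simps scaleR_add_left)
    then show ?thesis using DERIV_shift[where f="\<lambda>s. k (y + s *\<^sub>R e)" and x=0 and z=t] by simp
  qed
  then show ?thesis using DERIV_isconst_all[of "\<lambda>t. k (y + t *\<^sub>R e)" s 0] by simp
qed

context hsetup begin

lemma pd_Heps:
  assumes sHs: "smooth_on UNIV Hs" and e: "e \<in> Basis"
  shows "pd (Heps B V Hs \<epsilon>) e x = pd H e x + \<epsilon> * pd Hs e x"
proof (rule pd_eqI)
  have a: "((\<lambda>t. H (x + t *\<^sub>R e)) has_real_derivative pd H e x) (at 0)"
    using diff_line[OF H_deriv, of x e] frechet_pd[OF H_deriv] by simp
  have b: "((\<lambda>t. Hs (x + t *\<^sub>R e)) has_real_derivative pd Hs e x) (at 0)"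
    by (rule smooth_pd[OF sHs UNIV_I e])
  show "((\<lambda>t. Heps B V Hs \<epsilon> (x + t *\<^sub>R e)) has_real_derivative pd H e x + \<epsilon> * pd Hs e x) (at 0)"
    unfolding Heps_def using DERIV_add[OF a DERIV_cmult[OF b, of \<epsilon>]] by simp
qed

lemma ham_vf_Heps:
  assumes sHs: "smooth_on UNIV Hs"
  shows "ham_vf (Heps B V Hs \<epsilon>) x = ham_vf H x + \<epsilon> *\<^sub>R ham_vf Hs x"
proof -
  have "grad (Heps B V Hs \<epsilon>) x = grad H x + \<epsilon> *\<^sub>R grad Hs x"
    unfolding grad_def using pd_Heps[OF sHs]
    by (simp add: scaleR_add_left sum.distrib scaleR_sum_right)
  then show ?thesis by (simp add: ham_vf_def)
qed

lemma Hs_rev: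
  assumes sHs: "smooth_on UNIV Hs" and e0: "\<epsilon> \<noteq> 0"
    and r1: "reversible (Heps B V Hs \<epsilon>)" and r0: "reversible H"
  shows "Hs (calR x) = Hs x"
proof -
  have lc: "calR (a + c *\<^sub>R b) = calR a + c *\<^sub>R calR b" for a b c
    using bl_calR by (simp add: bounded_linear.linear linear_add linear_scale)
  have hv: "ham_vf Hs (calR y) = - calR (ham_vf Hs y)" for y
  proof -
    have "ham_vf H (calR y) + \<epsilon> *\<^sub>R ham_vf Hs (calR y) = - calR (ham_vf H y + \<epsilon> *\<^sub>R ham_vf Hs y)"
      using r1 unfolding reversible_def ham_vf_Heps[OF sHs] by blast
    moreover have "ham_vf H (calR y) = - calR (ham_vf H y)" using r0 unfolding reversible_def by blast
    ultimately have "\<epsilon> *\<^sub>R ham_vf Hs (calR y) = \<epsilon> *\<^sub>R (- calR (ham_vf Hs y))"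
      by (simp add: lc)
    then show ?thesis using e0 by (metis scaleR_cancel_left)
  qed
  have gr: "fst (grad Hs (calR y)) = - fst (grad Hs y) \<and> snd (grad Hs (calR y)) = snd (grad Hs y)" for y
    using hv[of y] by (simp add: ham_vf_def calR_eq prod_eq_iff)
  define k where "k y = Hs (calR y) - Hs y" for y
  have kd: "((\<lambda>t. k (y + t *\<^sub>R e)) has_real_derivative 0) (at 0)" if e: "e \<in> Basis" for y e
  proof -
    have b1: "((\<lambda>t. Hs (y + t *\<^sub>R e)) has_real_derivative inner (grad Hs y) e) (at 0)"
      using smooth_pd[OF sHs UNIV_I e] pd_inner_basis[OF e] by simp
    have b2: "((\<lambda>t. Hs (calR y + t *\<^sub>R e)) has_real_derivative inner (grad Hs (calR y)) e) (at 0)"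
      using smooth_pd[OF sHs UNIV_I e] pd_inner_basis[OF e] by simp
    from e consider (q) a where "a \<in> Basis" "e = (a, 0)" | (p) a where "a \<in> Basis" "e = (0, a)"
      unfolding Basis_prod_def by blast
    then show ?thesis
    proof cases
      case q
      have ce: "calR (y + t *\<^sub>R e) = calR y + (- t) *\<^sub>R e" for t
        using q by (simp add: calR_eq prod_eq_iff)
      have b3: "((\<lambda>t. Hs (calR y + (- t) *\<^sub>R e)) has_real_derivative - inner (grad Hs (calR y)) e) (at 0)"
      proof -
        have u: "(uminus has_real_derivative (-1)) (at (0::real))" by (auto intro!: derivative_eq_intros)
        have b2': "((\<lambda>t. Hs (calR y + t *\<^sub>R e)) has_real_derivative inner (grad Hs (calR y)) e) (at (uminus 0))"
          using b2 by simp
        from DERIV_chain2[where f="\<lambda>t. Hs (calR y + t *\<^sub>R e)" and g=uminus, OF b2' u] show ?thesis by simp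
      qed
      have "inner (grad Hs (calR y)) e = - inner (grad Hs y) e"
        using gr[of y] q by (simp add: inner_prod_def)
      then show ?thesis unfolding k_def ce using DERIV_diff[OF b3 b1] by simp
    next
      case p
      have ce: "calR (y + t *\<^sub>R e) = calR y + t *\<^sub>R e" for t
        using p by (simp add: calR_eq prod_eq_iff)
      have "inner (grad Hs (calR y)) e = inner (grad Hs y) e"
        using gr[of y] p by (simp add: inner_prod_def)
      then show ?thesis unfolding k_def ce using DERIV_diff[OF b2 b1] by simp
    qed
  qed
  obtain a b c d where xx: "x = ((a,b),(c,d))" by (metis prod.collapse)
  have B1: "((1::real,0::real),(0::real,0::real)) \<in> (Basis::st set)" and B2: "((0,1),(0,0)) \<in> (Basis::st set)"
    and B3: "((0,0),(1,0)) \<in> (Basis::st set)" and B4: "((0,0),(0,1)) \<in> (Basis::st set)"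
    by (simp_all add: Basis_st)
  have "x = (((0,0),(0,0)) + a *\<^sub>R ((1,0),(0,0)) + b *\<^sub>R ((0,1),(0,0))) + c *\<^sub>R ((0,0),(1,0)) + d *\<^sub>R ((0,0),(0,1))"
    by (simp add: xx)
  then have "k x = k ((0,0),(0,0))"
    using line_const[OF kd[OF B1]] line_const[OF kd[OF B2]] line_const[OF kd[OF B3]] line_const[OF kd[OF B4]]
    by metis
  also have "\<dots> = 0" by (simp add: k_def)
  finally show ?thesis by (simp add: k_def)
qed

end

lemma has_integral_reflect_UNIV_imp:
  fixes f :: "real \<Rightarrow> real"
  assumes "(f has_integral i) UNIV"
  shows "((\<lambda>t. f (- t)) has_integral i) UNIV"
proof -
  have A: "\<forall>a b. f integrable_on cbox a b" and
    B: "\<forall>e>0. \<exists>B>0. \<forall>a b. ball 0 B \<subseteq> cbox a b \<longrightarrow> norm (integral (cbox a b) f - i) < e"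
    using assms[unfolded has_integral_alt'] by auto
  have ii: "integral {a..b} (\<lambda>t. f (- t)) = integral {- b..- a} f" for a b :: real
    using Henstock_Kurzweil_Integration.integral_reflect_real[of "-a" "-b" f] by simp
  have ib: "ball 0 B \<subseteq> {a..b} \<Longrightarrow> ball 0 B \<subseteq> {-b..-a}" for a b B :: real
  proof
    fix x :: real assume s: "ball 0 B \<subseteq> {a..b}" and x: "x \<in> ball 0 B"
    then have "- x \<in> ball 0 B" by simp
    then have "- x \<in> {a..b}" using s by blast
    then show "x \<in> {-b..-a}" by auto
  qed
  show ?thesis unfolding has_integral_alt'
  proof (intro conjI allI impI)
    fix a b :: real
    have "f integrable_on {-b..-a}" using A by (metis interval_cbox)
    then show "(\<lambda>x. if x \<in> UNIV then f (- x) else 0) integrable_on cbox a b"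
      using Henstock_Kurzweil_Integration.integrable_reflect_real[where f=f and a="-b" and b="-a"] by simp
  next
    fix e :: real assume e: "e > 0"
    then obtain B where B: "B > 0" "\<forall>a b. ball 0 B \<subseteq> cbox a b \<longrightarrow> norm (integral (cbox a b) f - i) < e"
      using B by blast
    show "\<exists>B>0. \<forall>a b. ball 0 B \<subseteq> cbox a b \<longrightarrow> norm (integral (cbox a b) (\<lambda>x. if x \<in> UNIV then f (- x) else 0) - i) < e"
    proof (intro exI[of _ B] conjI allI impI)
      show "B > 0" by fact
      fix a b :: real assume "ball 0 B \<subseteq> cbox a b"
      then have "ball 0 B \<subseteq> cbox (-b) (-a)" using ib by auto
      then have "norm (integral (cbox (-b) (-a)) f - i) < e" using B by blast
      then show "norm (integral (cbox a b) (\<lambda>x. if x \<in> UNIV then f (- x) else 0) - i) < e"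
        using ii[of a b] by simp
    qed
  qed
qed

lemma integral_reflect_UNIV:
  fixes f :: "real \<Rightarrow> real"
  shows "integral UNIV (\<lambda>t. f (- t)) = integral UNIV f"
proof (cases "f integrable_on UNIV")
  case True
  then have "(f has_integral integral UNIV f) UNIV" by (simp add: has_integral_integral)
  from has_integral_reflect_UNIV_imp[OF this] show ?thesis by (rule integral_unique)
next
  case False
  have "\<not> (\<lambda>t. f (- t)) integrable_on UNIV"
  proof
    assume "(\<lambda>t. f (- t)) integrable_on UNIV"
    then obtain i where "((\<lambda>t. f (- t)) has_integral i) UNIV" by (auto simp: integrable_on_def)
    from has_integral_reflect_UNIV_imp[OF this] have "(f has_integral i) UNIV" by simp
    with False show False by (auto simp: integrable_on_def)
  qed
  with False show ?thesis by (simp add: not_integrable_integral)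
qed

lemma pd_periodic:
  assumes "\<And>z. f (z + c) = f z"
  shows "pd f b (x + c) = pd f b x"
proof -
  have "(\<lambda>t. f (x + c + t *\<^sub>R b)) = (\<lambda>t. f (x + t *\<^sub>R b))"
    by (rule ext) (metis assms add.assoc add.commute)
  then show ?thesis by (simp add: pd_def)
qed

lemma grad_periodic:
  assumes "\<And>z. f (z + c) = f z"
  shows "grad f (x + c) = grad f x"
  unfolding grad_def using pd_periodic[where f=f, OF assms] by simp

lemma ham_vf_periodic:
  assumes "\<And>z. F (z + c) = F z"
  shows "ham_vf F (x + c) = ham_vf F x"
  unfolding ham_vf_def using grad_periodic[where f=F, OF assms] by simp

lemma sfam_shift:
  assumes "sfam U f D"
  shows "sfam ((\<lambda>q. q + c) ` U) (\<lambda>q. f (q - c) + k) (\<lambda>l. if l = [] then (\<lambda>q. f (q - c) + k) else (\<lambda>q. D l (q - c)))"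
proof -
  have D0: "D [] = f" and cD: "\<And>l. continuous_on U (D l)"
    and dD: "\<And>l x b. x \<in> U \<Longrightarrow> b \<in> Basis \<Longrightarrow> ((\<lambda>t. D l (x + t *\<^sub>R b)) has_real_derivative D (b # l) x) (at 0)"
    using assms unfolding sfam_def by auto
  have img: "y \<in> (\<lambda>q. q + c) ` U \<longleftrightarrow> y - c \<in> U" for y by (auto simp: image_iff intro!: bexI[of _ "y - c"])
  have cs: "continuous_on ((\<lambda>q. q + c) ` U) (\<lambda>q. D l (q - c))" for l
    by (rule continuous_on_compose2[OF cD[of l]]) (auto intro!: continuous_intros simp: img)
  show ?thesis unfolding sfam_def
  proof (intro conjI allI impI)
    fix l
    show "continuous_on ((\<lambda>q. q + c) ` U) (if l = [] then (\<lambda>q. f (q - c) + k) else (\<lambda>q. D l (q - c)))"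
      using cs[of l] cs[of "[]"] D0 by (auto intro!: continuous_intros)
  next
    fix l and x b :: pt assume x: "x \<in> (\<lambda>q. q + c) ` U" and b: "b \<in> Basis"
    have xc: "x - c \<in> U" using x img by blast
    have d: "((\<lambda>t. D l (x - c + t *\<^sub>R b)) has_real_derivative D (b # l) (x - c)) (at 0)" using dD[OF xc b] .
    show "((\<lambda>t. (if l = [] then (\<lambda>q. f (q - c) + k) else (\<lambda>q. D l (q - c))) (x + t *\<^sub>R b)) has_real_derivative
          (if b # l = [] then (\<lambda>q. f (q - c) + k) else (\<lambda>q. D (b # l) (q - c))) x) (at 0)"
    proof (cases "l = []")
      case True
      have "((\<lambda>t. f (x - c + t *\<^sub>R b) + k) has_real_derivative D [b] (x - c)) (at 0)"
        using d True D0 by (auto intro!: derivative_eq_intros)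
      then show ?thesis using True by (simp add: algebra_simps)
    next
      case False
      then show ?thesis using d by (simp add: algebra_simps)
    qed
  qed simp
qed

context hsetup begin

lemma part2:
  fixes Su Ss :: "pt \<Rightarrow> real" and c0 :: st
  defines "c0 \<equiv> ((2*pi,0),(0,0))"
  assumes sHs: "smooth_on UNIV Hs"
    and Hs_rev: "\<And>x. Hs (calR x) = Hs x"
    and Hs_per: "\<And>x. Hs (x + c0) = Hs x"
    and H_per: "\<And>x. H (x + c0) = H x"
    and rvH: "reversible H"
    and HO: "H ((0,0),(0,0)) = 0" and EO: "E = ((0,0),(0,0))"
    and oU: "open Uu" "(pi,0) \<in> Uu" and oS: "open Us" "(-pi,0) \<in> Us"
    and sU: "smooth_on Uu Su" and sS: "smooth_on Us Ss"
    and Wu: "{(q, grad Su q) | q. q \<in> Uu} = {x \<in> Wu_loc H E N. fst x \<in> Uu}"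
    and Ws: "{(q, grad Ss q) | q. q \<in> Us} = {x \<in> Ws_loc H E (calR ` N). fst x \<in> Us}"
    and tB: "typeB Su Uu Ss Us \<sigma>"
    and W0: "open W0" "(pi, 0) \<in> W0"
    and qcW: "\<forall>q\<in>W0. qc 0 q = q \<and>
                  (\<forall>t. qc t q \<in> Sdom Uu Us \<and>
                       ((\<lambda>s. qc s q) has_vector_derivative
                          B (qc t q) (grad (Sglue Su Uu Ss \<sigma>) (qc t q))) (at t))"
  shows "\<exists>\<delta>>0. \<forall>q2. \<bar>q2\<bar> < \<delta> \<longrightarrow>
               Lmel Hs qc (Sglue Su Uu Ss \<sigma>) (pi, q2) = Lmel Hs qc (Sglue Su Uu Ss \<sigma>) (pi, - q2)"
proof -
  define S where "S = Sglue Su Uu Ss \<sigma>"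
  define cc :: pt where "cc = (2*pi, 0)"
  define T where "T = (\<lambda>q. q + cc) ` Us"
  have Tiff: "y \<in> T \<longleftrightarrow> y - cc \<in> Us" for y
    by (auto simp: T_def image_iff intro!: bexI[of _ "y - cc"])
  have oT: "open T"
  proof -
    have "T = (\<lambda>q. q - cc) -` Us" using Tiff by auto
    moreover have "open ((\<lambda>q. q - cc) -` Us)"
      by (rule open_vimage[OF oS(1)]) (intro continuous_intros)
    ultimately show ?thesis by simp
  qed
  have Dom: "Sdom Uu Us = Uu \<union> T" by (simp add: Sdom_def T_def cc_def)
  have SUu: "\<And>y. y \<in> Uu \<Longrightarrow> S y = Su y" by (simp add: S_def Sglue_def)
  have ShatE: "Shat Ss \<sigma> = (\<lambda>q. Ss (q - cc) + \<sigma>)" by (rule ext) (simp add: Shat_def cc_def)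
  have ST: "\<And>y. y \<in> T \<Longrightarrow> S y = Shat Ss \<sigma> y"
    using tB unfolding typeB_def S_def Sglue_def T_def cc_def by auto
  have gU: "grad S y = grad Su y" if "y \<in> Uu" for y by (rule grad_local[OF oU(1) that SUu])
  have gT: "grad S y = grad Ss (y - cc)" if "y \<in> T" for y
    using grad_local[OF oT that ST] Shat_grad by (simp add: cc_def)
  have cO: "calR E = E" by (simp add: EO)
  have HJ: "H (y, grad S y) = 0" if "y \<in> Sdom Uu Us" for y
  proof (cases "y \<in> Uu")
    case True
    then have "(y, grad Su y) \<in> Wu_loc H E N" using Wu by blast
    from energy_u[OF this] show ?thesis using gU[OF True] HO EO by simp
  next
    case False
    then have yT: "y \<in> T" using that Dom by auto
    then have "(y - cc, grad Ss (y - cc)) \<in> Ws_loc H E (calR ` N)" using Ws Tiff by blast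
    from energy_s[OF this] have "H (y - cc, grad Ss (y - cc)) = 0" using HO EO by simp
    moreover have "H (y, grad Ss (y - cc)) = H ((y - cc, grad Ss (y - cc)) + c0)"
      by (simp add: c0_def cc_def)
    ultimately show ?thesis using H_per gT[OF yT] by simp
  qed
  obtain Du where Du: "sfam Uu Su Du" using sU smooth_sfam by blast
  obtain Ds where Ds: "sfam Us Ss Ds" using sS smooth_sfam by blast
  have DT: "sfam T (Shat Ss \<sigma>) (\<lambda>l. if l = [] then (\<lambda>q. Ss (q - cc) + \<sigma>) else (\<lambda>q. Ds l (q - cc)))"
    using sfam_shift[OF Ds, of cc \<sigma>] unfolding ShatE T_def .
  define X where "X q s = (qc s q, grad S (qc s q))" for q s
  have Xd: "(X q has_vector_derivative ham_vf H (X q t)) (at t)" if q: "q \<in> W0" for q t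
  proof -
    have qt: "qc t q \<in> Sdom Uu Us" and qd: "((\<lambda>s. qc s q) has_vector_derivative B (qc t q) (grad S (qc t q))) (at t)"
      using qcW q by (auto simp: S_def)
    show ?thesis
    proof (cases "qc t q \<in> Uu")
      case True
      show ?thesis unfolding X_def[abs_def]
        by (rule hj_curve[OF Du oU(1) SUu _ qd True]) (use HJ Dom in auto)
    next
      case False
      then have "qc t q \<in> T" using qt Dom by auto
      then show ?thesis unfolding X_def[abs_def]
        by (intro hj_curve[OF DT oT ST _ qd]) (use HJ Dom in auto)
    qed
  qed
  obtain d1 where d1: "d1 > 0" "ball (pi,0) d1 \<subseteq> Uu \<inter> W0"
    using open_contains_ball[of "Uu \<inter> W0"] oU W0 by (meson IntI open_Int)
  obtain d2 where d2: "d2 > 0" "ball (-pi,0) d2 \<subseteq> Us" using oS open_contains_ball by blast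
  define d where "d = min d1 d2"
  have inU: "(pi, s) \<in> Uu \<inter> W0" and inS: "(-pi, s) \<in> Us" if "\<bar>s\<bar> < d" for s
  proof -
    have "dist (pi,0) (pi,s) = \<bar>s\<bar>" "dist (-pi,0) (-pi,s) = \<bar>s\<bar>"
      by (simp_all add: dist_Pair_Pair dist_real_def)
    then show "(pi, s) \<in> Uu \<inter> W0" "(-pi, s) \<in> Us" using d1 d2 that by (auto simp: d_def)
  qed
  show ?thesis unfolding S_def[symmetric]
  proof (intro exI[of _ d] conjI allI impI)
    show "d > 0" using d1 d2 by (simp add: d_def)
    fix s :: real assume s: "\<bar>s\<bar> < d"
    define a :: pt where "a = (pi, s)"
    define b :: pt where "b = (pi, - s)"
    have aU: "a \<in> Uu" "a \<in> W0" using inU[OF s] by (auto simp: a_def)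
    have ms: "\<bar>- s\<bar> < d" using s by simp
    have bW: "b \<in> W0" "b \<in> Uu" using inU[OF ms] by (auto simp: b_def)
    have bT: "b \<in> T" using inS[OF ms] Tiff by (simp add: b_def cc_def)
    have gab: "grad S a = grad S b"
    proof -
      have "grad Ss (- a) = grad Su a"
        by (rule grad_sym[OF Wu Ws rvH cO aU(1)]) (use inS[OF ms] in \<open>simp add: a_def\<close>)
      moreover have "b - cc = - a" by (simp add: a_def b_def cc_def)
      ultimately show ?thesis using gU[OF aU(1)] gT[OF bT] by simp
    qed
    define Z where "Z t = calR (X a (- t)) + c0" for t
    have Zd: "(Z has_vector_derivative ham_vf H (Z t)) (at t)" for t
    proof -
      have m: "(uminus has_vector_derivative (-1)) (at t)" by (auto intro!: derivative_eq_intros)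
      have "(X a has_vector_derivative ham_vf H (X a (- t))) (at (uminus t) within uminus ` UNIV)"
        using Xd[OF aU(2), of "-t"] by simp
      from vector_diff_chain_within[OF m this]
      have "((\<lambda>t. X a (- t)) has_vector_derivative - ham_vf H (X a (- t))) (at t)" by (simp add: o_def)
      from bounded_linear.has_vector_derivative[OF bl_calR this]
      have "((\<lambda>t. calR (X a (- t))) has_vector_derivative calR (- ham_vf H (X a (- t)))) (at t)" .
      then have "(Z has_vector_derivative calR (- ham_vf H (X a (- t)))) (at t)"
        unfolding Z_def[abs_def] by (rule has_vector_derivative_add_const[THEN iffD2])
      moreover have "calR (- ham_vf H (X a (- t))) = ham_vf H (Z t)"
      proof -
        have "calR (- ham_vf H (X a (- t))) = ham_vf H (calR (X a (- t)))"
          using rvH unfolding reversible_def by (simp only: calR_minus)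
        also have "\<dots> = ham_vf H (Z t)" unfolding Z_def
          by (rule ham_vf_periodic[where F=H, symmetric]) (rule H_per)
        finally show ?thesis .
      qed
      ultimately show ?thesis by simp
    qed
    have Z0: "Z 0 = X b 0"
    proof -
      have "qc 0 a = a" "qc 0 b = b" using qcW aU(2) bW(1) by auto
      then show ?thesis using gab by (simp add: Z_def X_def calR_eq a_def b_def c0_def)
    qed
    have ZX: "Z t = X b t" for t
      by (rule ode_unique[OF ham_vf_lip Zd Xd[OF bW(1)] Z0])
    have integrand: "Hs (X b t) - Hs ((0,0),(0,0)) = Hs (X a (- t)) - Hs ((0,0),(0,0))" for t
    proof -
      have "Hs (X b t) = Hs (Z t)" using ZX[of t] by simp
      also have "\<dots> = Hs (X a (- t))" unfolding Z_def using Hs_per Hs_rev by simp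
      finally show ?thesis by simp
    qed
    have "Lmel Hs qc S b = - integral UNIV (\<lambda>t. Hs (X b t) - Hs ((0,0),(0,0)))"
      by (simp add: Lmel_def X_def)
    also have "\<dots> = - integral UNIV (\<lambda>t. (\<lambda>t. Hs (X a t) - Hs ((0,0),(0,0))) (- t))"
      using integrand by simp
    also have "\<dots> = - integral UNIV (\<lambda>t. Hs (X a t) - Hs ((0,0),(0,0)))"
      using integral_reflect_UNIV[of "\<lambda>t. Hs (X a t) - Hs ((0,0),(0,0))"] by simp
    also have "\<dots> = Lmel Hs qc S a" by (simp add: Lmel_def X_def)
    finally show "Lmel Hs qc S (pi, s) = Lmel Hs qc S (pi, - s)" by (simp add: a_def b_def)
  qed
qed

end

theorem proposition9:
  fixes B :: "pt \<Rightarrow> pt \<Rightarrow> pt" and V :: "pt \<Rightarrow> real" and Hs :: "st \<Rightarrow> real"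
    and \<epsilon>0 a' :: real and gam :: "real \<Rightarrow> st" and Oe :: "real \<Rightarrow> st"
    and Uu Us :: "real \<Rightarrow> pt set" and Su Ss :: "real \<Rightarrow> pt \<Rightarrow> real"
    and N :: "real \<Rightarrow> st set" and \<sigma> :: "real \<Rightarrow> real"
    and qc :: "real \<Rightarrow> pt \<Rightarrow> pt"
  assumes B_lin: "\<forall>q. linear (B q)"
    and B_sym: "\<forall>q p p'. inner (B q p) p' = inner p (B q p')"
    and B_pos: "\<forall>q p. p \<noteq> 0 \<longrightarrow> inner (B q p) p > 0"
    and B_smooth: "\<forall>u\<in>Basis. \<forall>v\<in>Basis. smooth_on UNIV (\<lambda>q. inner (B q u) v)"
    and B_per: "periodic2 B"
    and B_q2: "\<forall>q1. \<forall>u\<in>Basis. \<forall>v\<in>Basis. pd (\<lambda>q. inner (B q u) v) (0,1) (q1,0) = 0"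
    and V_smooth: "smooth_on UNIV V" and V_per: "periodic2 V" and V0: "V (0,0) = 0"
    and V_max: "\<exists>r>0. \<forall>q\<in>ball (0,0) r. V q \<le> V (0,0)"
    and V_nondeg: "pd (pd V (1,0)) (1,0) (0,0) * pd (pd V (0,1)) (0,1) (0,0)
                   - pd (pd V (0,1)) (1,0) (0,0) * pd (pd V (1,0)) (0,1) (0,0) \<noteq> 0"
    and Hs_smooth: "smooth_on UNIV Hs"
    and Hs_per: "\<forall>p. periodic2 (\<lambda>q. Hs (q, p))"
    and gam_sol: "\<forall>t. (gam has_vector_derivative ham_vf (Ham B V) (gam t)) (at t)"
    and gam_q2: "\<forall>t. snd (fst (gam t)) = 0"
    and gam_incr: "strict_mono (\<lambda>t. fst (fst (gam t)))"
    and gam_minus: "(gam \<longlongrightarrow> ((0,0),(0,0))) at_bot"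
    and gam_plus: "(gam \<longlongrightarrow> ((2*pi,0),(0,0))) at_top"
    and eps0: "\<epsilon>0 > 0" and a'_pos: "a' > 0"
    and O_0: "Oe 0 = ((0,0),(0,0))"
    and O_cont: "continuous_on {-\<epsilon>0<..<\<epsilon>0} Oe"
    and O_eq: "\<forall>\<epsilon>. \<bar>\<epsilon>\<bar> < \<epsilon>0 \<longrightarrow> ham_vf (Heps B V Hs \<epsilon>) (Oe \<epsilon>) = 0"
    and O_unique: "\<exists>r>0. \<forall>\<epsilon>. \<bar>\<epsilon>\<bar> < \<epsilon>0 \<longrightarrow> Oe \<epsilon> \<in> ball ((0,0),(0,0)) r \<and>
                     (\<forall>x\<in>ball ((0,0),(0,0)) r. ham_vf (Heps B V Hs \<epsilon>) x = 0 \<longrightarrow> x = Oe \<epsilon>)"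
    and Uu_open: "\<forall>\<epsilon>. \<bar>\<epsilon>\<bar> < \<epsilon>0 \<longrightarrow> open (Uu \<epsilon>)"
    and Us_open: "\<forall>\<epsilon>. \<bar>\<epsilon>\<bar> < \<epsilon>0 \<longrightarrow> open (Us \<epsilon>)"
    and N_open: "\<forall>\<epsilon>. \<bar>\<epsilon>\<bar> < \<epsilon>0 \<longrightarrow> open (N \<epsilon>)"
    and Uu_arc: "\<forall>\<epsilon>. \<bar>\<epsilon>\<bar> < \<epsilon>0 \<longrightarrow> (\<forall>q1\<in>{0..pi+a'}. (q1,0) \<in> Uu \<epsilon>)"
    and Us_arc: "\<forall>\<epsilon>. \<bar>\<epsilon>\<bar> < \<epsilon>0 \<longrightarrow> (\<forall>q1\<in>{-pi-a'..0}. (q1,0) \<in> Us \<epsilon>)"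
    and Su_smooth: "\<forall>\<epsilon>. \<bar>\<epsilon>\<bar> < \<epsilon>0 \<longrightarrow> smooth_on (Uu \<epsilon>) (Su \<epsilon>)"
    and Ss_smooth: "\<forall>\<epsilon>. \<bar>\<epsilon>\<bar> < \<epsilon>0 \<longrightarrow> smooth_on (Us \<epsilon>) (Ss \<epsilon>)"
    and Wu_graph: "\<forall>\<epsilon>. \<bar>\<epsilon>\<bar> < \<epsilon>0 \<longrightarrow>
        {(q, grad (Su \<epsilon>) q) | q. q \<in> Uu \<epsilon>} =
        {x \<in> Wu_loc (Heps B V Hs \<epsilon>) (Oe \<epsilon>) (N \<epsilon>). fst x \<in> Uu \<epsilon>}"
    and Ws_graph: "\<forall>\<epsilon>. \<bar>\<epsilon>\<bar> < \<epsilon>0 \<longrightarrow>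
        {(q, grad (Ss \<epsilon>) q) | q. q \<in> Us \<epsilon>} =
        {x \<in> Ws_loc (Heps B V Hs \<epsilon>) (Oe \<epsilon>) (calR ` N \<epsilon>). fst x \<in> Us \<epsilon>}"
    and rev: "\<forall>\<epsilon>. \<bar>\<epsilon>\<bar> < \<epsilon>0 \<longrightarrow> reversible (Heps B V Hs \<epsilon>)"
  shows "(\<forall>\<epsilon>. \<bar>\<epsilon>\<bar> < \<epsilon>0 \<longrightarrow>
            (\<exists>\<delta>>0. \<forall>q2. \<bar>q2\<bar> < \<delta> \<longrightarrow>
               Lcal (Su \<epsilon>) (Ss \<epsilon>) (\<sigma> \<epsilon>) (pi, q2) = Lcal (Su \<epsilon>) (Ss \<epsilon>) (\<sigma> \<epsilon>) (pi, - q2)))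
       \<and> (typeB (Su 0) (Uu 0) (Ss 0) (Us 0) (\<sigma> 0) \<longrightarrow>
            (\<exists>W0. open W0 \<and> (pi, 0) \<in> W0 \<and>
               (\<forall>q\<in>W0. qc 0 q = q \<and>
                  (\<forall>t. qc t q \<in> Sdom (Uu 0) (Us 0) \<and>
                       ((\<lambda>s. qc s q) has_vector_derivative
                          B (qc t q) (grad (Sglue (Su 0) (Uu 0) (Ss 0) (\<sigma> 0)) (qc t q))) (at t)))) \<longrightarrow>
            (\<exists>\<delta>>0. \<forall>q2. \<bar>q2\<bar> < \<delta> \<longrightarrow>
               Lmel Hs qc (Sglue (Su 0) (Uu 0) (Ss 0) (\<sigma> 0)) (pi, q2)
               = Lmel Hs qc (Sglue (Su 0) (Uu 0) (Ss 0) (\<sigma> 0)) (pi, - q2)))"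
proof -
  have z: "((0,0),(0,0)) = (0::st)" by (simp add: zero_prod_def)
  have E1: "((1::real),(0::real)) \<in> (Basis::pt set)" and E2: "((0::real),(1::real)) \<in> (Basis::pt set)"
    by (simp_all add: Basis_pt)
  obtain D11 where s11: "sfam UNIV (bb B (1,0) (1,0)) D11"
    using B_smooth E1 smooth_sfam unfolding bb_def[abs_def] by blast
  obtain D12 where s12: "sfam UNIV (bb B (1,0) (0,1)) D12"
    using B_smooth E1 E2 smooth_sfam unfolding bb_def[abs_def] by blast
  obtain D22 where s22: "sfam UNIV (bb B (0,1) (0,1)) D22"
    using B_smooth E2 smooth_sfam unfolding bb_def[abs_def] by blast
  obtain DV where sV: "sfam UNIV V DV" using V_smooth smooth_sfam by blast
  interpret hsetup B V D11 D12 D22 DV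
    by unfold_locales (use B_lin B_sym s11 s12 s22 sV in auto)
  have Heps0: "Heps B V Hs 0 = Ham B V" by (rule ext) (simp add: Heps_def)
  have rvH: "reversible (Ham B V)"
  proof -
    have "reversible (Heps B V Hs 0)" using rev eps0 by simp
    then show ?thesis by (simp only: Heps0)
  qed
  have H_per: "Ham B V (x + ((2*pi,0),(0,0))) = Ham B V x" for x
  proof -
    have "B (fst x + (2*pi,0)) = B (fst x)" "V (fst x + (2*pi,0)) = V (fst x)"
      using B_per V_per unfolding periodic2_def by blast+
    then show ?thesis by (simp add: Ham_def)
  qed
  have Hs_rev: "Hs (calR x) = Hs x" for x
  proof (rule Hs_rev)
    show "smooth_on UNIV Hs" by (rule Hs_smooth)
    show "\<epsilon>0 / 2 \<noteq> 0" using eps0 by simp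
    show "reversible (Heps B V Hs (\<epsilon>0 / 2))" using rev eps0 by simp
    show "reversible (Ham B V)" by (rule rvH)
  qed
  have Hs_per': "Hs (x + ((2*pi,0),(0,0))) = Hs x" for x
  proof -
    have "Hs (fst x + (2*pi,0), snd x) = Hs (fst x, snd x)"
      using Hs_per unfolding periodic2_def by (rule allE) blast
    moreover have "x + ((2*pi,0),(0,0)) = (fst x + (2*pi,0), snd x)" by (simp add: prod_eq_iff)
    ultimately show ?thesis by simp
  qed
  have HO: "Ham B V ((0,0),(0,0)) = 0"
  proof -
    have "inner (B (0,0) (0,0)) ((0,0)::pt) = 0" by (simp add: inner_prod_def)
    then show ?thesis using V0 by (simp add: Ham_def)
  qed
  obtain r where r: "r > 0" "\<forall>\<epsilon>. \<bar>\<epsilon>\<bar> < \<epsilon>0 \<longrightarrow> Oe \<epsilon> \<in> ball ((0,0),(0,0)) r \<and>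
                     (\<forall>x\<in>ball ((0,0),(0,0)) r. ham_vf (Heps B V Hs \<epsilon>) x = 0 \<longrightarrow> x = Oe \<epsilon>)"
    using O_unique by blast
  have cO: "calR (Oe \<epsilon>) = Oe \<epsilon>" if "\<bar>\<epsilon>\<bar> < \<epsilon>0" for \<epsilon>
  proof -
    have a: "Oe \<epsilon> \<in> ball 0 r \<and> (\<forall>x\<in>ball 0 r. ham_vf (Heps B V Hs \<epsilon>) x = 0 \<longrightarrow> x = Oe \<epsilon>)"
      using r(2)[rule_format, OF that] unfolding z .
    show ?thesis
      by (rule calR_fixed[of "Heps B V Hs \<epsilon>" _ r]) (use O_eq[rule_format, OF that] rev[rule_format, OF that] r(1) a in blast)+
  qed
  have pi0: "pi \<in> {0..pi+a'}" and mpi0: "-pi \<in> {-pi-a'..0}" using a'_pos pi_gt_zero by auto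
  show ?thesis
  proof (intro conjI allI impI)
    fix \<epsilon> :: real assume e: "\<bar>\<epsilon>\<bar> < \<epsilon>0"
    show "\<exists>\<delta>>0. \<forall>q2. \<bar>q2\<bar> < \<delta> \<longrightarrow>
               Lcal (Su \<epsilon>) (Ss \<epsilon>) (\<sigma> \<epsilon>) (pi, q2) = Lcal (Su \<epsilon>) (Ss \<epsilon>) (\<sigma> \<epsilon>) (pi, - q2)"
      by (rule part1[OF Wu_graph[rule_format, OF e] Ws_graph[rule_format, OF e] rev[rule_format, OF e] cO[OF e]
            Uu_open[rule_format, OF e] _ Us_open[rule_format, OF e] _ Su_smooth[rule_format, OF e]
            Ss_smooth[rule_format, OF e]])
        (use Uu_arc[rule_format, OF e] pi0 Us_arc[rule_format, OF e] mpi0 in blast)+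
  next
    assume tB: "typeB (Su 0) (Uu 0) (Ss 0) (Us 0) (\<sigma> 0)"
    assume "\<exists>W0. open W0 \<and> (pi, 0) \<in> W0 \<and>
               (\<forall>q\<in>W0. qc 0 q = q \<and>
                  (\<forall>t. qc t q \<in> Sdom (Uu 0) (Us 0) \<and>
                       ((\<lambda>s. qc s q) has_vector_derivative
                          B (qc t q) (grad (Sglue (Su 0) (Uu 0) (Ss 0) (\<sigma> 0)) (qc t q))) (at t)))"
    then obtain W0 where W0: "open W0" "(pi, 0) \<in> W0"
      "\<forall>q\<in>W0. qc 0 q = q \<and>
                  (\<forall>t. qc t q \<in> Sdom (Uu 0) (Us 0) \<and>
                       ((\<lambda>s. qc s q) has_vector_derivative
                          B (qc t q) (grad (Sglue (Su 0) (Uu 0) (Ss 0) (\<sigma> 0)) (qc t q))) (at t))"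
      by blast
    have e0: "\<bar>0::real\<bar> < \<epsilon>0" using eps0 by simp
    show "\<exists>\<delta>>0. \<forall>q2. \<bar>q2\<bar> < \<delta> \<longrightarrow>
               Lmel Hs qc (Sglue (Su 0) (Uu 0) (Ss 0) (\<sigma> 0)) (pi, q2)
               = Lmel Hs qc (Sglue (Su 0) (Uu 0) (Ss 0) (\<sigma> 0)) (pi, - q2)"
    proof (rule part2[OF Hs_smooth Hs_rev Hs_per' H_per rvH HO O_0])
      show "open (Uu 0)" using Uu_open e0 by blast
      show "(pi,0) \<in> Uu 0" using Uu_arc e0 pi0 by blast
      show "open (Us 0)" using Us_open e0 by blast
      show "(-pi,0) \<in> Us 0" using Us_arc e0 mpi0 by blast
      show "smooth_on (Uu 0) (Su 0)" using Su_smooth e0 by blast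
      show "smooth_on (Us 0) (Ss 0)" using Ss_smooth e0 by blast
      show "{(q, grad (Su 0) q) | q. q \<in> Uu 0} = {x \<in> Wu_loc (Ham B V) (Oe 0) (N 0). fst x \<in> Uu 0}"
        using Wu_graph[rule_format, OF e0] unfolding Heps0 .
      show "{(q, grad (Ss 0) q) | q. q \<in> Us 0} = {x \<in> Ws_loc (Ham B V) (Oe 0) (calR ` N 0). fst x \<in> Us 0}"
        using Ws_graph[rule_format, OF e0] unfolding Heps0 .
      show "typeB (Su 0) (Uu 0) (Ss 0) (Us 0) (\<sigma> 0)" by (rule tB)
      show "open W0" "(pi,0) \<in> W0" by (rule W0(1), rule W0(2))
      show "\<forall>q\<in>W0. qc 0 q = q \<and>
                  (\<forall>t. qc t q \<in> Sdom (Uu 0) (Us 0) \<and>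
                       ((\<lambda>s. qc s q) has_vector_derivative
                          B (qc t q) (grad (Sglue (Su 0) (Uu 0) (Ss 0) (\<sigma> 0)) (qc t q))) (at t))" by (rule W0(3))
    qed
  qed
qed

end
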